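(* Let $\mathcal{C}$ be an idempotent Mal'cev clone on $\{0,1,2\}$ that contains a majority operation and preserves none of $\mu_0,\mu_1,\mu_2$ and $\varphi$. Then $\mathcal{C}\equiv_{\mathrm{m}}\mathcal{C}_2$ or $\mathcal{C}\equiv_{\mathrm{m}}\mathcal{I}_2$.
   Context: A clone is idempotent if $f(x,\dots,x)\approx x$ for all its operations; Mal'cev if it contains $d$ with $d(y,x,x)\approx d(x,x,y)\approx y$; a majority operation satisfies $m(x,y,y)\approx m(y,x,y)\approx m(y,y,x)\approx y$. $\mu_i$ is the equivalence relation on $\{0,1,2\}$ with classes $\{i\}$ and $\{0,1,2\}\setminus\{i\}$; $\varphi=\{(0,1),(1,2),(2,0)\}$. $\mathcal{C}_2=\mathrm{Pol}(\{0,1\};\neq,\{0\},\{1\})$ and $\mathcal{I}_2=\mathrm{Pol}(\{0,1\};\{0\},\{1\})$, where $\mathrm{Pol}(\Gamma)$ is the clone of operations preserving all relations of $\Gamma$. For an $n$-ary $f$ and $\sigma\colon[n]\to[r]$, $f_\sigma(x_1,\dots,x_r)=f(x_{\sigma(1)},\dots,x_{\sigma(n)})$; a minion homomorphism is an arity-preserving map $\xi$ between clones with $\xi(f_\sigma)=\xi(f)_\sigma$; $\mathcal{C}\equiv_{\mathrm{m}}\mathcal{D}$ means there are minion homomorphisms in both directions. *)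

theory Defs
  imports Main
begin

text \<open>Finitary operations on a carrier A: an operation is a pair (n, f) with arity n \<ge> 1
  and f applied to argument lists of length n over A; f is normalised to undefined elsewhere.\<close>

type_synonym 'a operation = "nat \<times> ('a list \<Rightarrow> 'a)"
type_synonym 'a relation = "nat \<times> 'a list set"

definition ext_on :: "'a set \<Rightarrow> nat \<Rightarrow> ('a list \<Rightarrow> 'a) \<Rightarrow> 'a list \<Rightarrow> 'a" where
  "ext_on A n h = (\<lambda>xs. if length xs = n \<and> set xs \<subseteq> A then h xs else undefined)"

definition ops :: "'a set \<Rightarrow> 'a operation set" where
  "ops A = {f. fst f \<ge> 1 \<and> (\<forall>xs. length xs = fst f \<and> set xs \<subseteq> A \<longrightarrow> snd f xs \<in> A)
              \<and> ext_on A (fst f) (snd f) = snd f}"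

definition proj :: "'a set \<Rightarrow> nat \<Rightarrow> nat \<Rightarrow> 'a operation" where
  "proj A n i = (n, ext_on A n (\<lambda>xs. xs ! i))"

definition comp_op :: "'a set \<Rightarrow> 'a operation \<Rightarrow> nat \<Rightarrow> (nat \<Rightarrow> 'a operation) \<Rightarrow> 'a operation" where
  "comp_op A f m gs = (m, ext_on A m (\<lambda>xs. snd f (map (\<lambda>i. snd (gs i) xs) [0..<fst f])))"

definition clone :: "'a set \<Rightarrow> 'a operation set \<Rightarrow> bool" where
  "clone A C \<longleftrightarrow> C \<subseteq> ops A
     \<and> (\<forall>n i. 1 \<le> n \<and> i < n \<longrightarrow> proj A n i \<in> C)
     \<and> (\<forall>f\<in>C. \<forall>m gs. 1 \<le> m \<and> (\<forall>i<fst f. gs i \<in> C \<and> fst (gs i) = m) \<longrightarrow> comp_op A f m gs \<in> C)"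

definition preserves :: "'a operation \<Rightarrow> 'a relation \<Rightarrow> bool" where
  "preserves f \<rho> \<longleftrightarrow> (\<forall>cols. (\<forall>j<fst f. cols j \<in> snd \<rho>) \<longrightarrow>
      map (\<lambda>i. snd f (map (\<lambda>j. cols j ! i) [0..<fst f])) [0..<fst \<rho>] \<in> snd \<rho>)"

definition Pol :: "'a set \<Rightarrow> 'a relation set \<Rightarrow> 'a operation set" where
  "Pol A \<Gamma> = {f \<in> ops A. \<forall>\<rho>\<in>\<Gamma>. preserves f \<rho>}"

definition clone_preserves :: "'a operation set \<Rightarrow> 'a relation \<Rightarrow> bool" where
  "clone_preserves C \<rho> \<longleftrightarrow> (\<forall>f\<in>C. preserves f \<rho>)"

definition idempotent_clone :: "'a set \<Rightarrow> 'a operation set \<Rightarrow> bool" where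
  "idempotent_clone A C \<longleftrightarrow> (\<forall>f\<in>C. \<forall>x\<in>A. snd f (replicate (fst f) x) = x)"

definition malcev_clone :: "'a set \<Rightarrow> 'a operation set \<Rightarrow> bool" where
  "malcev_clone A C \<longleftrightarrow> (\<exists>d\<in>C. fst d = 3 \<and>
      (\<forall>x\<in>A. \<forall>y\<in>A. snd d [y,x,x] = y \<and> snd d [x,x,y] = y))"

definition has_majority :: "'a set \<Rightarrow> 'a operation set \<Rightarrow> bool" where
  "has_majority A C \<longleftrightarrow> (\<exists>m\<in>C. fst m = 3 \<and>
      (\<forall>x\<in>A. \<forall>y\<in>A. snd m [x,y,y] = y \<and> snd m [y,x,y] = y \<and> snd m [y,y,x] = y))"

text \<open>Minor f_sigma for sigma : [n] -> [r] (indices 0-based).\<close>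
definition minor :: "'a set \<Rightarrow> 'a operation \<Rightarrow> nat \<Rightarrow> (nat \<Rightarrow> nat) \<Rightarrow> 'a operation" where
  "minor A f r \<sigma> = (r, ext_on A r (\<lambda>xs. snd f (map (\<lambda>i. xs ! \<sigma> i) [0..<fst f])))"

definition minion_hom :: "'a set \<Rightarrow> 'b set \<Rightarrow> 'a operation set \<Rightarrow> 'b operation set
    \<Rightarrow> ('a operation \<Rightarrow> 'b operation) \<Rightarrow> bool" where
  "minion_hom A B C D \<xi> \<longleftrightarrow>
     (\<forall>f\<in>C. \<xi> f \<in> D \<and> fst (\<xi> f) = fst f)
   \<and> (\<forall>f\<in>C. \<forall>r \<sigma>. 1 \<le> r \<and> (\<forall>i<fst f. \<sigma> i < r) \<longrightarrow> \<xi> (minor A f r \<sigma>) = minor B (\<xi> f) r \<sigma>)"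

definition minion_equiv :: "'a set \<Rightarrow> 'b set \<Rightarrow> 'a operation set \<Rightarrow> 'b operation set \<Rightarrow> bool" where
  "minion_equiv A B C D \<longleftrightarrow> (\<exists>\<xi>. minion_hom A B C D \<xi>) \<and> (\<exists>\<xi>. minion_hom B A D C \<xi>)"

definition A3 :: "nat set" where "A3 = {0,1,2}"
definition A2 :: "nat set" where "A2 = {0,1}"

definition mu :: "nat \<Rightarrow> nat relation" where
  "mu i = (2, {[x,y] | x y. x \<in> A3 \<and> y \<in> A3 \<and> (x = i \<longleftrightarrow> y = i)})"

definition phi :: "nat relation" where
  "phi = (2, {[0,1],[1,2],[2,0]})"

definition C2 :: "nat operation set" where
  "C2 = Pol A2 {(2, {[0,1],[1,0]}), (1, {[0]}), (1, {[1]})}"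

definition I2 :: "nat operation set" where
  "I2 = Pol A2 {(1, {[0]}), (1, {[1]})}"

end

theory Submission
  imports Defs
begin

lemma ext_on_eval: "length xs = n \<Longrightarrow> set xs \<subseteq> A \<Longrightarrow> ext_on A n h xs = h xs"
  by (simp add: ext_on_def)

lemma ext_on_cong: "(\<And>xs. length xs = n \<Longrightarrow> set xs \<subseteq> A \<Longrightarrow> h xs = g xs) \<Longrightarrow> ext_on A n h = ext_on A n g"
  by (auto simp: ext_on_def fun_eq_iff)

lemma ops_arity: "f \<in> ops A \<Longrightarrow> 1 \<le> fst f"
  by (simp add: ops_def)

lemma ops_val: "f \<in> ops A \<Longrightarrow> length xs = fst f \<Longrightarrow> set xs \<subseteq> A \<Longrightarrow> snd f xs \<in> A"
  by (simp add: ops_def)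

lemma ops_eqI:
  assumes "f \<in> ops A" "g \<in> ops A" "fst f = fst g"
    and "\<And>xs. length xs = fst f \<Longrightarrow> set xs \<subseteq> A \<Longrightarrow> snd f xs = snd g xs"
  shows "f = g"
proof -
  have "snd f = ext_on A (fst f) (snd f)" using assms(1) by (simp add: ops_def)
  also have "\<dots> = ext_on A (fst f) (snd g)" by (rule ext_on_cong) (use assms(4) in auto)
  also have "\<dots> = snd g" using assms(2,3) by (simp add: ops_def)
  finally show ?thesis using assms(3) by (simp add: prod_eq_iff)
qed

lemma clone_ops: "clone A C \<Longrightarrow> f \<in> C \<Longrightarrow> f \<in> ops A"
  by (auto simp: clone_def)

lemma clone_proj: "clone A C \<Longrightarrow> 1 \<le> n \<Longrightarrow> i < n \<Longrightarrow> proj A n i \<in> C"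
  by (auto simp: clone_def)

lemma clone_comp: "clone A C \<Longrightarrow> f \<in> C \<Longrightarrow> 1 \<le> m \<Longrightarrow> (\<And>i. i < fst f \<Longrightarrow> gs i \<in> C \<and> fst (gs i) = m)
   \<Longrightarrow> comp_op A f m gs \<in> C"
  unfolding clone_def by blast

lemma comp_eval: "length xs = m \<Longrightarrow> set xs \<subseteq> A \<Longrightarrow>
   snd (comp_op A f m gs) xs = snd f (map (\<lambda>i. snd (gs i) xs) [0..<fst f])"
  by (simp add: comp_op_def ext_on_def)

lemma comp_fst[simp]: "fst (comp_op A f m gs) = m"
  by (simp add: comp_op_def)

lemma proj_eval: "length xs = n \<Longrightarrow> set xs \<subseteq> A \<Longrightarrow> snd (proj A n i) xs = xs ! i"
  by (simp add: proj_def ext_on_def)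

lemma proj_fst[simp]: "fst (proj A n i) = n"
  by (simp add: proj_def)

lemma A3_iff: "x \<in> A3 \<longleftrightarrow> x = 0 \<or> x = 1 \<or> x = 2"
  by (auto simp: A3_def)

lemma A2_iff: "x \<in> A2 \<longleftrightarrow> x = 0 \<or> x = 1"
  by (auto simp: A2_def)

lemma A2_sub_A3: "A2 \<subseteq> A3" by (auto simp: A2_def A3_def)

lemma finite_A3: "finite A3" by (simp add: A3_def)

lemma bp_interp:
  assumes cl: "clone A3 C" and mC: "m \<in> C" and m3: "fst m = 3"
    and maj: "\<And>x y. x \<in> A3 \<Longrightarrow> y \<in> A3 \<Longrightarrow> snd m [x,y,y] = y \<and> snd m [y,x,y] = y \<and> snd m [y,y,x] = y"
    and g: "g \<in> ops A3"
    and loc: "\<And>x y. length x = fst g \<Longrightarrow> set x \<subseteq> A3 \<Longrightarrow> length y = fst g \<Longrightarrow> set y \<subseteq> A3 \<Longrightarrow>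
         \<exists>c\<in>C. fst c = fst g \<and> snd c x = snd g x \<and> snd c y = snd g y"
  shows "g \<in> C"
proof -
  define n where "n = fst g"
  define T where "T = {xs. length xs = n \<and> set xs \<subseteq> A3}"
  have n1: "1 \<le> n" using g ops_arity n_def by blast
  have mm: "snd m [x,x,x] = x" if "x \<in> A3" for x using maj[OF that that] by blast
  have P: "\<forall>s\<in>T. \<forall>t\<in>T. \<exists>c\<in>C. fst c = n \<and> (\<forall>u\<in>S \<union> {s,t}. snd c u = snd g u)"
    if "finite S" "S \<subseteq> T" for S
    using that
  proof (induction S rule: finite_induct)
    case empty
    show ?case using loc unfolding T_def n_def by auto
  next
    case (insert u S)
    have uT: "u \<in> T" and ST: "S \<subseteq> T" using insert.prems by auto
    show ?case
    proof (intro ballI)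
      fix s t assume sT: "s \<in> T" and tT: "t \<in> T"
      obtain c1 where c1: "c1 \<in> C" "fst c1 = n" "\<forall>v\<in>S \<union> {s,t}. snd c1 v = snd g v"
        using insert.IH[OF ST] sT tT by blast
      obtain c2 where c2: "c2 \<in> C" "fst c2 = n" "\<forall>v\<in>S \<union> {u,t}. snd c2 v = snd g v"
        using insert.IH[OF ST] uT tT by blast
      obtain c3 where c3: "c3 \<in> C" "fst c3 = n" "\<forall>v\<in>S \<union> {u,s}. snd c3 v = snd g v"
        using insert.IH[OF ST] uT sT by blast
      define gs where "gs = (\<lambda>i::nat. [c1,c2,c3] ! i)"
      have gsC: "gs i \<in> C \<and> fst (gs i) = n" if "i < fst m" for i
        using that c1 c2 c3 m3 by (auto simp: gs_def less_Suc_eq numeral_3_eq_3)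
      define c where "c = comp_op A3 m n gs"
      have cC: "c \<in> C" unfolding c_def by (rule clone_comp[OF cl mC n1 gsC])
      have ceval: "snd c v = snd m [snd c1 v, snd c2 v, snd c3 v]" if "v \<in> T" for v
        using that m3 by (simp add: c_def T_def comp_eval gs_def numeral_3_eq_3 upt_rec)
      have inA: "snd ci v \<in> A3" if "ci \<in> C" "fst ci = n" "v \<in> T" for ci v
        using that clone_ops[OF cl] ops_val unfolding T_def by fastforce
      have gA: "snd g v \<in> A3" if "v \<in> T" for v
        using that g ops_val unfolding T_def n_def by fastforce
      have "\<forall>v\<in>insert u S \<union> {s,t}. snd c v = snd g v"
      proof
        fix v assume v: "v \<in> insert u S \<union> {s,t}"
        have vT: "v \<in> T" using v uT ST sT tT by auto
        show "snd c v = snd g v"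
        proof (cases "v \<in> S")
          case True
          then show ?thesis using c1 c2 c3 ceval[OF vT] mm[OF gA[OF vT]] by auto
        next
          case False
          then have "v = u \<or> v = s \<or> v = t" using v by auto
          then show ?thesis
          proof (elim disjE)
            assume "v = u" then show ?thesis
              using c2 c3 ceval[OF vT] maj[OF inA[OF c1(1,2) vT] gA[OF vT]] by auto
          next
            assume "v = s" then show ?thesis
              using c1 c3 ceval[OF vT] maj[OF inA[OF c2(1,2) vT] gA[OF vT]] by auto
          next
            assume "v = t" then show ?thesis
              using c1 c2 ceval[OF vT] maj[OF inA[OF c3(1,2) vT] gA[OF vT]] by auto
          qed
        qed
      qed
      then show "\<exists>c\<in>C. fst c = n \<and> (\<forall>v\<in>insert u S \<union> {s,t}. snd c v = snd g v)"
        using cC unfolding c_def by (intro bexI[of _ "comp_op A3 m n gs"]) auto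
    qed
  qed
  have finT: "finite T" unfolding T_def using finite_lists_length_eq[OF finite_A3, of n] by (simp add: conj_commute)
  have r0: "replicate n 0 \<in> T" unfolding T_def by (auto simp: A3_def)
  obtain c where c: "c \<in> C" "fst c = n" "\<forall>v\<in>T. snd c v = snd g v"
    using P[OF finT order_refl] r0 by blast
  have "c = g"
    by (rule ops_eqI[OF clone_ops[OF cl c(1)] g]) (use c n_def T_def in auto)
  then show ?thesis using c(1) by simp
qed


definition inv1 :: "nat operation set \<Rightarrow> nat set \<Rightarrow> bool" where
  "inv1 C U \<longleftrightarrow> U \<subseteq> A3 \<and> (\<forall>c\<in>C. \<forall>xs. length xs = fst c \<longrightarrow> set xs \<subseteq> U \<longrightarrow> snd c xs \<in> U)"

definition pres2 :: "nat operation \<Rightarrow> (nat \<times> nat) set \<Rightarrow> bool" where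
  "pres2 c R \<longleftrightarrow> (\<forall>xs ys. length xs = fst c \<longrightarrow> length ys = fst c \<longrightarrow>
      (\<forall>j<fst c. (xs!j, ys!j) \<in> R) \<longrightarrow> (snd c xs, snd c ys) \<in> R)"

definition inv2 :: "nat operation set \<Rightarrow> (nat \<times> nat) set \<Rightarrow> bool" where
  "inv2 C R \<longleftrightarrow> R \<subseteq> A3 \<times> A3 \<and> (\<forall>c\<in>C. pres2 c R)"

lemma pres2D: "pres2 c R \<Longrightarrow> length xs = fst c \<Longrightarrow> length ys = fst c \<Longrightarrow>
      (\<And>j. j<fst c \<Longrightarrow> (xs!j, ys!j) \<in> R) \<Longrightarrow> (snd c xs, snd c ys) \<in> R"
  unfolding pres2_def by blast

lemma inv2D: "inv2 C R \<Longrightarrow> c \<in> C \<Longrightarrow> length xs = fst c \<Longrightarrow> length ys = fst c \<Longrightarrow>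
      (\<And>j. j<fst c \<Longrightarrow> (xs!j, ys!j) \<in> R) \<Longrightarrow> (snd c xs, snd c ys) \<in> R"
  unfolding inv2_def pres2_def by blast

lemma inv1D: "inv1 C U \<Longrightarrow> c \<in> C \<Longrightarrow> length xs = fst c \<Longrightarrow> set xs \<subseteq> U \<Longrightarrow> snd c xs \<in> U"
  unfolding inv1_def by blast

lemma choice_nat: "(\<And>j. j < n \<Longrightarrow> \<exists>x. P j x) \<Longrightarrow> \<exists>f. \<forall>j<n. P j (f j)"
  by metis

lemma inv_to_mem:
  assumes cl: "clone A3 C" and mC: "m \<in> C" and m3: "fst m = 3"
    and maj: "\<And>x y. x \<in> A3 \<Longrightarrow> y \<in> A3 \<Longrightarrow> snd m [x,y,y] = y \<and> snd m [y,x,y] = y \<and> snd m [y,y,x] = y"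
    and g: "g \<in> ops A3"
    and pr: "\<And>R. inv2 C R \<Longrightarrow> pres2 g R"
  shows "g \<in> C"
proof (rule bp_interp[OF cl mC m3 maj g])
  fix x y :: "nat list"
  assume x: "length x = fst g" "set x \<subseteq> A3" and y: "length y = fst g" "set y \<subseteq> A3"
  define n where "n = fst g"
  have n1: "1 \<le> n" using g ops_arity n_def by blast
  define R where "R = {(snd c x, snd c y) | c. c \<in> C \<and> fst c = n}"
  have "inv2 C R"
    unfolding inv2_def
  proof (intro conjI ballI)
    show "R \<subseteq> A3 \<times> A3"
      using x y clone_ops[OF cl] ops_val unfolding R_def n_def by fastforce
  next
    fix c' assume c': "c' \<in> C"
    show "pres2 c' R"
      unfolding pres2_def
    proof (intro allI impI)
      fix xs ys assume l: "length xs = fst c'" "length ys = fst c'" and col: "\<forall>j<fst c'. (xs ! j, ys ! j) \<in> R"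
      have "\<And>j. j < fst c' \<Longrightarrow> \<exists>c. c \<in> C \<and> fst c = n \<and> xs!j = snd c x \<and> ys!j = snd c y"
        using col unfolding R_def by blast
      then obtain cs where cs: "\<forall>j<fst c'. cs j \<in> C \<and> fst (cs j) = n \<and> xs!j = snd (cs j) x \<and> ys!j = snd (cs j) y"
        using choice_nat[where P="\<lambda>j c. c \<in> C \<and> fst c = n \<and> xs!j = snd c x \<and> ys!j = snd c y"] by blast
      define cc where "cc = comp_op A3 c' n cs"
      have ccC: "cc \<in> C" unfolding cc_def by (rule clone_comp[OF cl c' n1]) (use cs in blast)
      have "snd cc x = snd c' (map (\<lambda>i. snd (cs i) x) [0..<fst c'])"
        unfolding cc_def by (rule comp_eval) (use x n_def in auto)
      also have "map (\<lambda>i. snd (cs i) x) [0..<fst c'] = xs"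
        by (rule nth_equalityI) (use l cs in auto)
      finally have e1: "snd cc x = snd c' xs" .
      have "snd cc y = snd c' (map (\<lambda>i. snd (cs i) y) [0..<fst c'])"
        unfolding cc_def by (rule comp_eval) (use y n_def in auto)
      also have "map (\<lambda>i. snd (cs i) y) [0..<fst c'] = ys"
        by (rule nth_equalityI) (use l cs in auto)
      finally have e2: "snd cc y = snd c' ys" .
      have fcc: "fst cc = n" by (simp add: cc_def)
      show "(snd c' xs, snd c' ys) \<in> R"
        unfolding R_def by (rule CollectI, rule exI[of _ cc]) (simp add: e1 e2 ccC fcc)
    qed
  qed
  then have "pres2 g R" by (rule pr)
  moreover have "(x!j, y!j) \<in> R" if "j < fst g" for j
  proof -
    have "proj A3 n j \<in> C" using clone_proj[OF cl n1] that n_def by simp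
    moreover have "snd (proj A3 n j) x = x!j" "snd (proj A3 n j) y = y!j"
      using proj_eval x y n_def by auto
    ultimately show ?thesis unfolding R_def by (metis (mono_tags, lifting) mem_Collect_eq proj_fst)
  qed
  ultimately have "(snd g x, snd g y) \<in> R" using x y by (intro pres2D) auto
  then obtain c where "c \<in> C" "fst c = fst g" "snd g x = snd c x" "snd g y = snd c y"
    unfolding R_def n_def by blast
  then show "\<exists>c\<in>C. fst c = fst g \<and> snd c x = snd g x \<and> snd c y = snd g y"
    by metis
qed


definition swp :: "nat \<Rightarrow> nat \<Rightarrow> nat" where
  "swp a x = (if x = a then a else 3 - a - x)"

definition tr :: "nat \<Rightarrow> (nat \<times> nat) set" where
  "tr a = (\<lambda>x. (x, swp a x)) ` A3"

definition PHI :: "(nat \<times> nat) set" where "PHI = {(0,1),(1,2),(2,0)}"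

definition MU :: "nat \<Rightarrow> (nat \<times> nat) set" where
  "MU i = {(x,y). x \<in> A3 \<and> y \<in> A3 \<and> (x = i \<longleftrightarrow> y = i)}"

lemma rel_to_list_pres:
  assumes "inv2 C R"
  shows "clone_preserves C (2, {[x,y] | x y. (x,y) \<in> R})"
  unfolding clone_preserves_def preserves_def
proof (intro ballI allI impI)
  fix f cols assume f: "f \<in> C" and cols: "\<forall>j<fst f. cols j \<in> snd (2::nat, {[x, y] |x y. (x, y) \<in> R})"
  define xs where "xs = map (\<lambda>j. cols j ! 0) [0..<fst f]"
  define ys where "ys = map (\<lambda>j. cols j ! 1) [0..<fst f]"
  have "(snd f xs, snd f ys) \<in> R"
    by (rule inv2D[OF assms f]) (use cols in \<open>auto simp: xs_def ys_def\<close>)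
  moreover have "map (\<lambda>i. snd f (map (\<lambda>j. cols j ! i) [0..<fst f])) [0..<fst (2::nat, {[x, y] |x y. (x, y) \<in> R})]
      = [snd f xs, snd f ys]"
    by (simp add: xs_def ys_def upt_rec)
  ultimately show "map (\<lambda>i. snd f (map (\<lambda>j. cols j ! i) [0..<fst f])) [0..<fst (2::nat, {[x, y] |x y. (x, y) \<in> R})]
      \<in> snd (2::nat, {[x, y] |x y. (x, y) \<in> R})" by simp
qed

lemma mu_eq: "mu i = (2, {[x,y] | x y. (x,y) \<in> MU i})"
  by (simp add: mu_def MU_def)

lemma phi_eq: "phi = (2, {[x,y] | x y. (x,y) \<in> PHI})"
  by (auto simp: phi_def PHI_def)

locale ctx =
  fixes C :: "nat operation set" and d m :: "nat operation"
  assumes cl: "clone A3 C"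
    and idem: "idempotent_clone A3 C"
    and dC: "d \<in> C" and d3: "fst d = 3"
    and dm: "\<And>x y. x \<in> A3 \<Longrightarrow> y \<in> A3 \<Longrightarrow> snd d [y,x,x] = y \<and> snd d [x,x,y] = y"
    and mC: "m \<in> C" and m3: "fst m = 3"
    and maj: "\<And>x y. x \<in> A3 \<Longrightarrow> y \<in> A3 \<Longrightarrow> snd m [x,y,y] = y \<and> snd m [y,x,y] = y \<and> snd m [y,y,x] = y"
    and nmu0: "\<not> clone_preserves C (mu 0)"
    and nmu1: "\<not> clone_preserves C (mu 1)"
    and nmu2: "\<not> clone_preserves C (mu 2)"
    and nphi: "\<not> clone_preserves C phi"
begin

lemma opsC: "c \<in> C \<Longrightarrow> c \<in> ops A3" using clone_ops[OF cl] .

lemma valC: "c \<in> C \<Longrightarrow> length xs = fst c \<Longrightarrow> set xs \<subseteq> A3 \<Longrightarrow> snd c xs \<in> A3"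
  using ops_val opsC by blast

lemma idemC: "c \<in> C \<Longrightarrow> x \<in> A3 \<Longrightarrow> snd c (replicate (fst c) x) = x"
  using idem unfolding idempotent_clone_def by blast

lemma mem_C: "g \<in> ops A3 \<Longrightarrow> (\<And>R. inv2 C R \<Longrightarrow> pres2 g R) \<Longrightarrow> g \<in> C"
  using inv_to_mem[OF cl mC m3 maj] by blast

lemma no_MU: "inv2 C (MU i) \<Longrightarrow> i \<in> A3 \<Longrightarrow> False"
  using rel_to_list_pres[of C "MU i"] nmu0 nmu1 nmu2 unfolding mu_eq[symmetric] A3_iff by auto

lemma no_PHI: "inv2 C PHI \<Longrightarrow> False"
  using rel_to_list_pres[of C PHI] nphi unfolding phi_eq[symmetric] by auto

lemma inv2_converse: "inv2 C R \<Longrightarrow> inv2 C (R\<inverse>)"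
  unfolding inv2_def pres2_def by auto

lemma inv2_Int: "inv2 C R \<Longrightarrow> inv2 C S \<Longrightarrow> inv2 C (R \<inter> S)"
  unfolding inv2_def pres2_def by auto

lemma inv2_prod: assumes U: "inv1 C U" and V: "inv1 C V" shows "inv2 C (U \<times> V)"
  unfolding inv2_def pres2_def
proof (intro conjI ballI allI impI)
  show "U \<times> V \<subseteq> A3 \<times> A3" using U V unfolding inv1_def by auto
next
  fix c xs ys assume c: "c \<in> C" and l: "length xs = fst c" "length ys = fst c" and col: "\<forall>j<fst c. (xs ! j, ys ! j) \<in> U \<times> V"
  have "set xs \<subseteq> U" "set ys \<subseteq> V" using l col by (auto simp: set_conv_nth)
  then show "(snd c xs, snd c ys) \<in> U \<times> V" using inv1D[OF U c l(1)] inv1D[OF V c l(2)] by auto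
qed

lemma inv1_A3: "inv1 C A3"
  unfolding inv1_def using valC by auto

lemma inv1_single: "a \<in> A3 \<Longrightarrow> inv1 C {a}"
proof -
  assume a: "a \<in> A3"
  have "snd c xs = a" if "c \<in> C" "length xs = fst c" "set xs \<subseteq> {a}" for c xs
  proof -
    have "xs = replicate (fst c) a" using that by (metis replicate_eqI singletonD subsetD)
    then show ?thesis using idemC[OF that(1) a] by simp
  qed
  then show ?thesis using a unfolding inv1_def by auto
qed

lemma inv2_Id: "inv2 C (Id_on A3)"
  unfolding inv2_def pres2_def
proof (intro conjI ballI allI impI)
  fix c xs ys assume c: "c \<in> C" and l: "length xs = fst c" "length ys = fst c" and col: "\<forall>j<fst c. (xs ! j, ys ! j) \<in> Id_on A3"
  have "xs = ys" by (rule nth_equalityI) (use l col in auto)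
  moreover have "set xs \<subseteq> A3" using l col by (auto simp: set_conv_nth)
  ultimately show "(snd c xs, snd c ys) \<in> Id_on A3" using valC[OF c l(1)] by auto
qed auto

lemma inv2_comp:
  assumes R: "inv2 C R" and S: "inv2 C S"
  shows "inv2 C (R O S)"
  unfolding inv2_def pres2_def
proof (intro conjI ballI allI impI)
  show "R O S \<subseteq> A3 \<times> A3" using R S unfolding inv2_def by auto
next
  fix c xs ys assume c: "c \<in> C" and l: "length xs = fst c" "length ys = fst c" and col: "\<forall>j<fst c. (xs ! j, ys ! j) \<in> R O S"
  obtain bs where bs: "\<forall>j<fst c. (xs!j, bs j) \<in> R \<and> (bs j, ys!j) \<in> S"
    using choice_nat[of "fst c" "\<lambda>j b. (xs!j, b) \<in> R \<and> (b, ys!j) \<in> S"] col by blast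
  define zs where "zs = map bs [0..<fst c]"
  have "(snd c xs, snd c zs) \<in> R" by (rule inv2D[OF R c l(1)]) (use bs in \<open>auto simp: zs_def\<close>)
  moreover have "(snd c zs, snd c ys) \<in> S" by (rule inv2D[OF S c _ l(2)]) (use bs in \<open>auto simp: zs_def\<close>)
  ultimately show "(snd c xs, snd c ys) \<in> R O S" by auto
qed

lemma inv1_dom: assumes R: "inv2 C R" shows "inv1 C (fst ` R)"
  unfolding inv1_def
proof (intro conjI ballI allI impI)
  show "fst ` R \<subseteq> A3" using R unfolding inv2_def by auto
next
  fix c xs assume c: "c \<in> C" and l: "length xs = fst c" and s: "set xs \<subseteq> fst ` R"
  have "\<exists>y. (xs!j, y) \<in> R" if "j < fst c" for j
  proof -
    have "xs!j \<in> set xs" using l that by simp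
    then have "xs!j \<in> fst ` R" using s by (rule subsetD[rotated])
    then show ?thesis by force
  qed
  then obtain bs where bs: "\<forall>j<fst c. (xs!j, bs j) \<in> R"
    using choice_nat[of "fst c" "\<lambda>j y. (xs!j, y) \<in> R"] by blast
  have "(snd c xs, snd c (map bs [0..<fst c])) \<in> R"
    by (rule inv2D[OF R c l]) (simp_all add: bs)
  then show "snd c xs \<in> fst ` R" by (metis fst_conv image_eqI)
qed

lemma inv1_ran: assumes R: "inv2 C R" shows "inv1 C (snd ` R)"
proof -
  have "fst ` (R\<inverse>) = snd ` R" by force
  then show ?thesis using inv1_dom[OF inv2_converse[OF R]] by simp
qed

lemma inv1_image: assumes U: "inv1 C U" and R: "inv2 C R" shows "inv1 C (R `` U)"
proof -
  have "R `` U = snd ` (R \<inter> (U \<times> A3))" using R unfolding inv2_def by force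
  moreover have "inv2 C (R \<inter> (U \<times> A3))" using inv2_Int[OF R inv2_prod[OF U inv1_A3]] .
  ultimately show ?thesis using inv1_ran by simp
qed

lemma rect:
  assumes R: "inv2 C R" and "(x,y) \<in> R" "(x',y) \<in> R" "(x',y') \<in> R"
  shows "(x,y') \<in> R"
proof -
  have A: "x \<in> A3" "x' \<in> A3" "y \<in> A3" "y' \<in> A3" using assms R unfolding inv2_def by auto
  have "(snd d [x,x',x'], snd d [y,y,y']) \<in> R"
  proof (rule inv2D[OF R dC])
    fix j assume "j < fst d"
    then have "j = 0 \<or> j = 1 \<or> j = 2" using d3 by auto
    then show "([x,x',x'] ! j, [y,y,y'] ! j) \<in> R" using assms by auto
  qed (simp_all add: d3)
  then show ?thesis using dm[OF A(2) A(1)] dm[OF A(3) A(4)] by simp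
qed

end


lemma three_cover:
  assumes "G \<subseteq> A3" "y \<in> G" "y' \<in> G" "z \<in> G" "y \<noteq> y'" "y \<noteq> z" "y' \<noteq> z"
  shows "G = A3"
proof -
  have "y \<in> A3" "y' \<in> A3" "z \<in> A3" using assms by auto
  then have "A3 \<subseteq> {y,y',z}" using assms(5-7) unfolding A3_iff by (auto simp: A3_def)
  then show ?thesis using assms(1-4) by auto
qed

lemma tr0: "tr 0 = {(0,0),(1,2),(2,1)}" by (simp add: tr_def A3_def swp_def)
lemma tr1: "tr 1 = {(0,2),(1,1),(2,0)}" by (simp add: tr_def A3_def swp_def)
lemma tr2: "tr 2 = {(0,1),(1,0),(2,2)}" by (simp add: tr_def A3_def swp_def)
lemma IdA3: "Id_on A3 = {(0,0),(1,1),(2,2)}" by (auto simp: A3_def)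

lemma all9: "(x,y) \<in> E \<longleftrightarrow> (x,y) \<in> S" if "S \<subseteq> A3 \<times> A3" "x \<in> A3" "y \<in> A3"
     "(0,0) \<in> S" "(1,1) \<in> S" "(2,2) \<in> S" "(0,0) \<in> E" "(1,1) \<in> E" "(2,2) \<in> E"
     "(1,0) \<in> E \<longleftrightarrow> (0,1) \<in> E" "(2,0) \<in> E \<longleftrightarrow> (0,2) \<in> E" "(2,1) \<in> E \<longleftrightarrow> (1,2) \<in> E"
     "(0,1) \<in> S \<longleftrightarrow> (0,1) \<in> E" "(1,0) \<in> S \<longleftrightarrow> (0,1) \<in> E"
     "(0,2) \<in> S \<longleftrightarrow> (0,2) \<in> E" "(2,0) \<in> S \<longleftrightarrow> (0,2) \<in> E"
     "(1,2) \<in> S \<longleftrightarrow> (1,2) \<in> E" "(2,1) \<in> S \<longleftrightarrow> (1,2) \<in> E" for S E x y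
proof -
  have "x = 0 \<or> x = 1 \<or> x = 2" "y = 0 \<or> y = 1 \<or> y = 2" using that(2,3) A3_iff by auto
  then show ?thesis using that(4-) by (elim disjE) simp_all
qed

lemma MU_sub: "MU i \<subseteq> A3 \<times> A3" by (auto simp: MU_def)
lemma Id_sub: "Id_on A3 \<subseteq> A3 \<times> A3" by auto

lemma PHIc: "PHI\<inverse> = {(0,2),(1,0),(2,1)}" by (auto simp: PHI_def)
lemma trc0: "tr 0 O tr 1 = PHI\<inverse>" unfolding PHIc tr0 tr1 by auto
lemma trc1: "tr 0 O tr 2 = PHI" unfolding PHI_def tr0 tr2 by auto
lemma trc2: "tr 1 O tr 2 = PHI\<inverse>" unfolding PHIc tr1 tr2 by auto
lemma trc3: "tr 1 O tr 0 = PHI" unfolding PHI_def tr1 tr0 by auto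
lemma trc4: "tr 2 O tr 0 = PHI\<inverse>" unfolding PHIc tr2 tr0 by auto
lemma trc5: "tr 2 O tr 1 = PHI" unfolding PHI_def tr2 tr1 by auto
lemmas trc = trc0 trc1 trc2 trc3 trc4 trc5

context ctx
begin

lemma equiv_cases:
  assumes E: "inv2 C E" and refl: "\<And>x. x \<in> A3 \<Longrightarrow> (x,x) \<in> E"
    and sym: "\<And>x y. (x,y) \<in> E \<Longrightarrow> (y,x) \<in> E"
    and trans: "\<And>x y z. (x,y) \<in> E \<Longrightarrow> (y,z) \<in> E \<Longrightarrow> (x,z) \<in> E"
  shows "E = Id_on A3 \<or> E = A3 \<times> A3"
proof -
  have sub: "E \<subseteq> A3 \<times> A3" using E inv2_def by auto
  have ext: "E = S" if "S \<subseteq> A3 \<times> A3" "\<And>x y. x \<in> A3 \<Longrightarrow> y \<in> A3 \<Longrightarrow> (x,y) \<in> E \<longleftrightarrow> (x,y) \<in> S" for S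
  proof
    show "E \<subseteq> S" using sub that by auto
    show "S \<subseteq> E" using that by auto
  qed
  have r: "(0,0) \<in> E" "(1,1) \<in> E" "(2,2) \<in> E" using refl by (auto simp: A3_def)
  have s: "(1,0) \<in> E \<longleftrightarrow> (0,1) \<in> E" "(2,0) \<in> E \<longleftrightarrow> (0,2) \<in> E" "(2,1) \<in> E \<longleftrightarrow> (1,2) \<in> E"
    using sym by blast+
  have t1: "(1,2) \<in> E" if "(0,1) \<in> E" "(0,2) \<in> E" using trans sym that by blast
  have t2: "(0,2) \<in> E" if "(0,1) \<in> E" "(1,2) \<in> E" using trans sym that by blast
  have t3: "(0,1) \<in> E" if "(0,2) \<in> E" "(1,2) \<in> E" using trans sym that by blast
  have E9: "E = S" if h: "S \<subseteq> A3 \<times> A3" "(0,0) \<in> S" "(1,1) \<in> S" "(2,2) \<in> S"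
     "(0,1) \<in> S \<longleftrightarrow> (0,1) \<in> E" "(1,0) \<in> S \<longleftrightarrow> (0,1) \<in> E"
     "(0,2) \<in> S \<longleftrightarrow> (0,2) \<in> E" "(2,0) \<in> S \<longleftrightarrow> (0,2) \<in> E"
     "(1,2) \<in> S \<longleftrightarrow> (1,2) \<in> E" "(2,1) \<in> S \<longleftrightarrow> (1,2) \<in> E" for S
    by (rule ext[OF h(1)], rule all9[OF h(1) _ _ h(2-4) r s h(5-10)])
  consider (a) "(0,1) \<in> E" "(0,2) \<in> E" "(1,2) \<in> E" | (b) "(0,1) \<notin> E" "(0,2) \<notin> E" "(1,2) \<notin> E"
    | (c) "(0,1) \<in> E" "(0,2) \<notin> E" "(1,2) \<notin> E" | (d) "(0,1) \<notin> E" "(0,2) \<in> E" "(1,2) \<notin> E"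
    | (e) "(0,1) \<notin> E" "(0,2) \<notin> E" "(1,2) \<in> E"
    using t1 t2 t3 by blast
  then show ?thesis
  proof cases
    case a
    have "E = A3 \<times> A3" by (rule E9[OF subset_refl]) (use a in \<open>simp_all add: A3_iff\<close>)
    then show ?thesis by simp
  next
    case b
    have "E = Id_on A3" by (rule E9[OF Id_sub]) (use b in \<open>simp_all add: IdA3\<close>)
    then show ?thesis by simp
  next
    case c
    have "E = MU 2" by (rule E9[OF MU_sub]) (use c in \<open>simp_all add: A3_iff MU_def\<close>)
    then show ?thesis using no_MU[of 2] E by (simp add: A3_def)
  next
    case d
    have "E = MU 1" by (rule E9[OF MU_sub]) (use d in \<open>simp_all add: A3_iff MU_def\<close>)
    then show ?thesis using no_MU[of 1] E by (simp add: A3_def)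
  next
    case e
    have "E = MU 0" by (rule E9[OF MU_sub]) (use e in \<open>simp_all add: A3_iff MU_def\<close>)
    then show ?thesis using no_MU[of 0] E by (simp add: A3_def)
  qed
qed

lemma prod_case:
  assumes R: "inv2 C R" and xy: "(x,y) \<in> R" "(x,y') \<in> R" "y \<noteq> y'"
  shows "R = fst ` R \<times> snd ` R"
proof -
  define L where "L = R\<inverse> O R"
  have L: "inv2 C L" unfolding L_def by (rule inv2_comp[OF inv2_converse[OF R] R])
  have Lmem: "(u,v) \<in> L \<longleftrightarrow> (\<exists>z. (z,u) \<in> R \<and> (z,v) \<in> R)" for u v unfolding L_def by auto
  have RA: "R \<subseteq> A3 \<times> A3" using R inv2_def by auto
  have GL: "snd ` R \<times> snd ` R \<subseteq> L"
  proof (cases "snd ` R = A3")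
    case True
    have eq: "L = Id_on A3 \<or> L = A3 \<times> A3"
    proof (rule equiv_cases[OF L])
      fix u assume "u \<in> A3"
      then obtain z where "(z,u) \<in> R" using True by force
      then show "(u,u) \<in> L" using Lmem by blast
    next
      fix u v assume "(u,v) \<in> L" then show "(v,u) \<in> L" using Lmem by blast
    next
      fix u v w assume "(u,v) \<in> L" "(v,w) \<in> L"
      then obtain z1 z2 where "(z1,u) \<in> R" "(z1,v) \<in> R" "(z2,v) \<in> R" "(z2,w) \<in> R" using Lmem by blast
      then have "(z1,w) \<in> R" using rect[OF R] by blast
      then show "(u,w) \<in> L" using Lmem \<open>(z1,u) \<in> R\<close> by blast
    qed
    have "(y,y') \<in> L" using xy Lmem by blast
    then have "L = A3 \<times> A3" using eq xy(3) by auto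
    then show ?thesis using True by simp
  next
    case False
    have yG: "y \<in> snd ` R" "y' \<in> snd ` R" using xy by force+
    have GA: "snd ` R \<subseteq> A3" using RA by auto
    have G2: "snd ` R = {y,y'}"
    proof
      show "snd ` R \<subseteq> {y,y'}"
      proof
        fix z assume z: "z \<in> snd ` R"
        show "z \<in> {y,y'}"
        proof (rule ccontr)
          assume "z \<notin> {y,y'}"
          then have "snd ` R = A3" using three_cover[OF GA yG z] xy(3) by auto
          then show False using False by simp
        qed
      qed
      show "{y,y'} \<subseteq> snd ` R" using yG by auto
    qed
    have "(y,y) \<in> L" "(y,y') \<in> L" "(y',y) \<in> L" "(y',y') \<in> L" using xy Lmem by blast+
    then show ?thesis using G2 by auto
  qed
  show ?thesis
  proof
    show "R \<subseteq> fst ` R \<times> snd ` R" by force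
    show "fst ` R \<times> snd ` R \<subseteq> R"
    proof
      fix zz assume "zz \<in> fst ` R \<times> snd ` R"
      then obtain a b a' b' where zz: "zz = (a,b)" and ab: "(a, b') \<in> R" "(a', b) \<in> R" by force
      show "zz \<in> R" unfolding zz
      proof -
      have "(b', b) \<in> L" using GL ab by force
      then obtain z where "(z,b') \<in> R" "(z,b) \<in> R" using Lmem by blast
      then show "(a, b) \<in> R" using rect[OF R] ab(1) by blast
    qed
    qed
  qed
qed

lemma no_cycle: assumes "inv2 C R" "R = PHI \<or> R\<inverse> = PHI" shows False
proof (cases "R = PHI")
  case True then show False using no_PHI assms(1) by simp
next
  case False then have "R\<inverse> = PHI" using assms(2) by simp
  then show False using no_PHI inv2_converse[OF assms(1)] by simp
qed

lemma classify:
  assumes R: "inv2 C R"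
  shows "R = fst ` R \<times> snd ` R \<or> (\<exists>p q p' q'. p \<noteq> q \<and> p' \<noteq> q' \<and> R = {(p,p'),(q,q')})
     \<or> R = Id_on A3 \<or> (\<exists>a\<in>A3. R = tr a)"
proof (cases "\<exists>x y y'. (x,y) \<in> R \<and> (x,y') \<in> R \<and> y \<noteq> y'")
  case True
  then obtain x y y' where "(x,y) \<in> R" "(x,y') \<in> R" "y \<noteq> y'" by blast
  then have "R = fst ` R \<times> snd ` R" by (rule prod_case[OF R])
  then show ?thesis by blast
next
  case F1: False
  show ?thesis
  proof (cases "\<exists>x x' y. (x,y) \<in> R \<and> (x',y) \<in> R \<and> x \<noteq> x'")
    case True
    then obtain x x' y where "(y,x) \<in> R\<inverse>" "(y,x') \<in> R\<inverse>" "x \<noteq> x'" by blast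
    then have conv: "R\<inverse> = fst ` (R\<inverse>) \<times> snd ` (R\<inverse>)" using prod_case[OF inv2_converse[OF R]] by blast
    have "R = fst ` R \<times> snd ` R"
    proof
      show "R \<subseteq> fst ` R \<times> snd ` R" by force
      show "fst ` R \<times> snd ` R \<subseteq> R"
      proof
        fix zz assume "zz \<in> fst ` R \<times> snd ` R"
        then obtain a b where zz: "zz = (a,b)" "a \<in> fst ` R" "b \<in> snd ` R" by blast
        then have "(b,a) \<in> fst ` (R\<inverse>) \<times> snd ` (R\<inverse>)" by force
        then have "(b,a) \<in> R\<inverse>" using conv by simp
        then show "zz \<in> R" using zz by simp
      qed
    qed
    then show ?thesis by blast
  next
    case F2: False
    have fnR: "y = y'" if "(x,y) \<in> R" "(x,y') \<in> R" for x y y' using F1 that by blast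
    have injR: "x = x'" if "(x,y) \<in> R" "(x',y) \<in> R" for x x' y using F2 that by blast
    have RA: "R \<subseteq> A3 \<times> A3" using R inv2_def by auto
    show ?thesis
    proof (cases "fst ` R = A3")
      case True
      have ex: "\<exists>y. (x,y) \<in> R" if "x \<in> A3" for x
      proof -
        have "x \<in> fst ` R" using True that by simp
        then show ?thesis by force
      qed
      obtain a0 where a0: "(0,a0) \<in> R" using ex[of 0] by (auto simp: A3_def)
      obtain a1 where a1: "(1,a1) \<in> R" using ex[of 1] by (auto simp: A3_def)
      obtain a2 where a2: "(2,a2) \<in> R" using ex[of 2] by (auto simp: A3_def)
      note a = a0 a1 a2
      have aA: "a0 \<in> A3" "a1 \<in> A3" "a2 \<in> A3" using a RA by auto
      have Req: "R = {(0,a0),(1,a1),(2,a2)}"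
      proof
        show "{(0,a0),(1,a1),(2,a2)} \<subseteq> R" using a by auto
        show "R \<subseteq> {(0,a0),(1,a1),(2,a2)}"
        proof
          fix zz assume "zz \<in> R"
          then obtain u v where zz: "zz = (u,v)" and uv: "(u,v) \<in> R" by (cases zz) auto
          have "u \<in> A3" using RA uv by auto
          then have "u = 0 \<or> u = 1 \<or> u = 2" using A3_iff by simp
          then show "zz \<in> {(0,a0),(1,a1),(2,a2)}" unfolding zz using fnR uv a by auto
        qed
      qed
      have dis: "a0 \<noteq> a1" "a0 \<noteq> a2" "a1 \<noteq> a2"
        using injR[of 0 a0 1] injR[of 0 a0 2] injR[of 1 a1 2] a by auto
      have "a0 = 0 \<or> a0 = 1 \<or> a0 = 2" "a1 = 0 \<or> a1 = 1 \<or> a1 = 2" "a2 = 0 \<or> a2 = 1 \<or> a2 = 2"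
        using aA A3_iff by auto
      then have six: "(a0 = 0 \<and> a1 = 1 \<and> a2 = 2) \<or> (a0 = 0 \<and> a1 = 2 \<and> a2 = 1) \<or> (a0 = 1 \<and> a1 = 0 \<and> a2 = 2)
        \<or> (a0 = 1 \<and> a1 = 2 \<and> a2 = 0) \<or> (a0 = 2 \<and> a1 = 0 \<and> a2 = 1) \<or> (a0 = 2 \<and> a1 = 1 \<and> a2 = 0)"
        using dis by auto
      then show ?thesis
      proof (elim disjE conjE)
        assume "a0 = 0" "a1 = 1" "a2 = 2" then have "R = Id_on A3" unfolding Req IdA3 by simp
        then show ?thesis by blast
      next
        assume "a0 = 0" "a1 = 2" "a2 = 1" then have "R = tr 0" unfolding Req tr0 by simp
        then show ?thesis unfolding A3_def by blast
      next
        assume "a0 = 1" "a1 = 0" "a2 = 2" then have "R = tr 2" unfolding Req tr2 by simp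
        then show ?thesis unfolding A3_def by blast
      next
        assume "a0 = 1" "a1 = 2" "a2 = 0" then have "R = PHI" unfolding Req PHI_def by simp
        then show ?thesis using no_cycle[OF R] by blast
      next
        assume "a0 = 2" "a1 = 0" "a2 = 1" then have "R\<inverse> = PHI" unfolding Req PHI_def by auto
        then show ?thesis using no_cycle[OF R] by blast
      next
        assume "a0 = 2" "a1 = 1" "a2 = 0" then have "R = tr 1" unfolding Req tr1 by simp
        then show ?thesis unfolding A3_def by blast
      qed
    next
      case False
      show ?thesis
      proof (cases "R = {}")
        case True then show ?thesis by simp
      next
        case False
        then obtain p p' where pp: "(p,p') \<in> R" by auto
        show ?thesis
        proof (cases "R = {(p,p')}")
          case True then show ?thesis by simp
        next
          case False
          then have "\<exists>z\<in>R. z \<noteq> (p,p')" using pp by blast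
          then obtain q q' where qq: "(q,q') \<in> R" "(q,q') \<noteq> (p,p')" by auto
          have pq: "p \<noteq> q"
          proof
            assume "p = q"
            then have "p' = q'" using fnR[of p p' q'] pp qq(1) by simp
            then show False using qq(2) \<open>p = q\<close> by simp
          qed
          have pq': "p' \<noteq> q'"
          proof
            assume "p' = q'"
            then have "p = q" using injR[of p p' q] pp qq(1) by simp
            then show False using pq by simp
          qed
          have "R = {(p,p'),(q,q')}"
          proof
            show "{(p,p'),(q,q')} \<subseteq> R" using pp qq by auto
            show "R \<subseteq> {(p,p'),(q,q')}"
            proof
              fix zz assume "zz \<in> R"
              then obtain r r' where zz: "zz = (r,r')" and rr: "(r,r') \<in> R" by (cases zz) auto
              show "zz \<in> {(p,p'),(q,q')}"
              proof (cases "r = p \<or> r = q")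
                case True then show ?thesis unfolding zz using fnR rr pp qq by auto
              next
                case False
                have m1: "p \<in> fst ` R" using pp by force
                have m2: "q \<in> fst ` R" using qq by force
                have m3: "r \<in> fst ` R" using rr by force
                have m0: "fst ` R \<subseteq> A3" using RA by auto
                have "fst ` R = A3"
                  by (rule three_cover[OF m0 m1 m2 m3 pq]) (use False in auto)
                then show ?thesis using \<open>fst ` R \<noteq> A3\<close> by simp
              qed
            qed
          qed
          then have "\<exists>p q p' q'. p \<noteq> q \<and> p' \<noteq> q' \<and> R = {(p,p'),(q,q')}"
            using pq pq' by (intro exI[of _ p] exI[of _ q] exI[of _ p'] exI[of _ q'] conjI)
          then show ?thesis by blast
        qed
      qed
    qed
  qed
qed

lemma tr_unique:
  assumes "inv2 C (tr a)" "inv2 C (tr b)" "a \<in> A3" "b \<in> A3"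
  shows "a = b"
proof (rule ccontr)
  assume ne: "a \<noteq> b"
  have c: "inv2 C (tr a O tr b)" by (rule inv2_comp[OF assms(1,2)])
  have "a = 0 \<or> a = 1 \<or> a = 2" "b = 0 \<or> b = 1 \<or> b = 2" using assms(3,4) A3_iff by auto
  then have "tr a O tr b = PHI \<or> tr a O tr b = PHI\<inverse>"
    using ne by (elim disjE) (simp_all add: trc0 trc1 trc2 trc3 trc4 trc5 trc[unfolded One_nat_def])
  then have "tr a O tr b = PHI \<or> (tr a O tr b)\<inverse> = PHI" by auto
  then show False using no_cycle[OF c] by blast
qed

end


definition xi :: "nat \<Rightarrow> (nat \<Rightarrow> nat \<Rightarrow> nat) \<Rightarrow> (nat list \<Rightarrow> nat) \<Rightarrow> nat operation \<Rightarrow> nat operation" where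
  "xi k hc e f = (fst f, ext_on A3 (fst f) (\<lambda>xs. e (map (\<lambda>i. snd f (map (hc i) xs)) [0..<k])))"

definition vec :: "nat \<Rightarrow> (nat \<Rightarrow> nat \<Rightarrow> nat) \<Rightarrow> nat operation \<Rightarrow> nat list \<Rightarrow> nat list" where
  "vec k hc f xs = map (\<lambda>i. snd f (map (hc i) xs)) [0..<k]"

lemma xi_fst[simp]: "fst (xi k hc e f) = fst f" by (simp add: xi_def)

lemma xi_eval: "length xs = fst f \<Longrightarrow> set xs \<subseteq> A3 \<Longrightarrow> snd (xi k hc e f) xs = e (vec k hc f xs)"
  by (simp add: xi_def ext_on_def vec_def)

lemma ext_on_idem: "ext_on A n (ext_on A n h) = ext_on A n h"
  by (auto simp: ext_on_def fun_eq_iff)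

lemma vec_A2:
  assumes f: "f \<in> ops A2" and hc: "\<And>i v. hc i v \<in> A2" and l: "length xs = fst f"
  shows "length (vec k hc f xs) = k" "set (vec k hc f xs) \<subseteq> A2"
proof -
  show "length (vec k hc f xs) = k" by (simp add: vec_def)
  have "snd f (map (hc i) xs) \<in> A2" for i
    by (rule ops_val[OF f]) (use l hc in auto)
  then show "set (vec k hc f xs) \<subseteq> A2" by (auto simp: vec_def)
qed

lemma xi_ops:
  assumes f: "f \<in> ops A2" and hc: "\<And>i v. hc i v \<in> A2"
    and e: "\<And>v. length v = k \<Longrightarrow> set v \<subseteq> A2 \<Longrightarrow> e v \<in> A3"
  shows "xi k hc e f \<in> ops A3"
  unfolding ops_def
proof (intro CollectI conjI allI impI)
  show "1 \<le> fst (xi k hc e f)" using ops_arity[OF f] by simp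
  fix xs assume "length xs = fst (xi k hc e f) \<and> set xs \<subseteq> A3"
  then show "snd (xi k hc e f) xs \<in> A3"
    using xi_eval[of xs f] e vec_A2[OF f hc] by simp
next
  show "ext_on A3 (fst (xi k hc e f)) (snd (xi k hc e f)) = snd (xi k hc e f)"
    by (simp add: xi_def ext_on_idem)
qed

lemma xi_minor:
  assumes hc: "\<And>i v. hc i v \<in> A2" and \<sigma>: "\<forall>i<fst f. \<sigma> i < r"
  shows "xi k hc e (minor A2 f r \<sigma>) = minor A3 (xi k hc e f) r \<sigma>"
proof -
  have "ext_on A3 r (\<lambda>xs. e (map (\<lambda>i. snd (minor A2 f r \<sigma>) (map (hc i) xs)) [0..<k]))
      = ext_on A3 r (\<lambda>xs. snd (xi k hc e f) (map (\<lambda>i. xs ! \<sigma> i) [0..<fst f]))"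
  proof (rule ext_on_cong)
    fix xs :: "nat list" assume l: "length xs = r" and s: "set xs \<subseteq> A3"
    have s2: "set (map (hc i) xs) \<subseteq> A2" for i using hc by auto
    have m1: "snd (minor A2 f r \<sigma>) (map (hc i) xs) = snd f (map (\<lambda>j. hc i (xs ! \<sigma> j)) [0..<fst f])" for i
    proof -
      have "map (\<lambda>ia. map (hc i) xs ! \<sigma> ia) [0..<fst f] = map (\<lambda>j. hc i (xs ! \<sigma> j)) [0..<fst f]"
        using l \<sigma> by (intro map_cong) auto
      moreover have "snd (minor A2 f r \<sigma>) (map (hc i) xs) = snd f (map (\<lambda>ia. map (hc i) xs ! \<sigma> ia) [0..<fst f])"
        using l s2[of i] by (simp add: minor_def ext_on_def)
      ultimately show ?thesis by metis
    qed
    have s3: "set (map (\<lambda>i. xs ! \<sigma> i) [0..<fst f]) \<subseteq> A3"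
    proof
      fix z assume "z \<in> set (map (\<lambda>i. xs ! \<sigma> i) [0..<fst f])"
      then obtain i where i: "i < fst f" "z = xs ! \<sigma> i" by auto
      then have "\<sigma> i < length xs" using \<sigma> l by simp
      then have "xs ! \<sigma> i \<in> set xs" by (rule nth_mem)
      then show "z \<in> A3" using s i(2) by auto
    qed
    have m2: "snd (xi k hc e f) (map (\<lambda>i. xs ! \<sigma> i) [0..<fst f])
        = e (map (\<lambda>i. snd f (map (\<lambda>j. hc i (xs ! \<sigma> j)) [0..<fst f])) [0..<k])"
      by (subst xi_eval) (use s3 in \<open>simp_all add: vec_def comp_def\<close>)
    show "e (map (\<lambda>i. snd (minor A2 f r \<sigma>) (map (hc i) xs)) [0..<k])
        = snd (xi k hc e f) (map (\<lambda>i. xs ! \<sigma> i) [0..<fst f])"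
      by (simp add: m1 m2)
  qed
  then show ?thesis by (simp add: xi_def minor_def)
qed

definition rho :: "(nat \<Rightarrow> nat) \<Rightarrow> (nat \<Rightarrow> nat) \<Rightarrow> nat operation \<Rightarrow> nat operation" where
  "rho emb dec f = (fst f, ext_on A2 (fst f) (\<lambda>xs. dec (snd f (map emb xs))))"

lemma rho_fst[simp]: "fst (rho emb dec f) = fst f" by (simp add: rho_def)

lemma rho_eval: "length xs = fst f \<Longrightarrow> set xs \<subseteq> A2 \<Longrightarrow> snd (rho emb dec f) xs = dec (snd f (map emb xs))"
  by (simp add: rho_def ext_on_def)

lemma rho_minor:
  assumes emb: "\<And>v. v \<in> A2 \<Longrightarrow> emb v \<in> A3" and \<sigma>: "\<forall>i<fst f. \<sigma> i < r"
  shows "rho emb dec (minor A3 f r \<sigma>) = minor A2 (rho emb dec f) r \<sigma>"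
proof -
  have "ext_on A2 r (\<lambda>xs. dec (snd (minor A3 f r \<sigma>) (map emb xs)))
      = ext_on A2 r (\<lambda>xs. snd (rho emb dec f) (map (\<lambda>i. xs ! \<sigma> i) [0..<fst f]))"
  proof (rule ext_on_cong)
    fix xs :: "nat list" assume l: "length xs = r" and s: "set xs \<subseteq> A2"
    have s2: "set (map emb xs) \<subseteq> A3" using emb s by auto
    have m1: "snd (minor A3 f r \<sigma>) (map emb xs) = snd f (map (\<lambda>j. emb (xs ! \<sigma> j)) [0..<fst f])"
    proof -
      have "map (\<lambda>ia. map emb xs ! \<sigma> ia) [0..<fst f] = map (\<lambda>j. emb (xs ! \<sigma> j)) [0..<fst f]"
        using l \<sigma> by (intro map_cong) auto
      moreover have "snd (minor A3 f r \<sigma>) (map emb xs) = snd f (map (\<lambda>ia. map emb xs ! \<sigma> ia) [0..<fst f])"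
        using l s2 by (simp add: minor_def ext_on_def)
      ultimately show ?thesis by metis
    qed
    have s3: "set (map (\<lambda>i. xs ! \<sigma> i) [0..<fst f]) \<subseteq> A2"
    proof
      fix z assume "z \<in> set (map (\<lambda>i. xs ! \<sigma> i) [0..<fst f])"
      then obtain i where i: "i < fst f" "z = xs ! \<sigma> i" by auto
      then have "\<sigma> i < length xs" using \<sigma> l by simp
      then have "xs ! \<sigma> i \<in> set xs" by (rule nth_mem)
      then show "z \<in> A2" using s i(2) by auto
    qed
    have m2: "snd (rho emb dec f) (map (\<lambda>i. xs ! \<sigma> i) [0..<fst f])
        = dec (snd f (map (\<lambda>j. emb (xs ! \<sigma> j)) [0..<fst f]))"
      by (subst rho_eval) (use s3 in \<open>simp_all add: comp_def\<close>)
    show "dec (snd (minor A3 f r \<sigma>) (map emb xs)) = snd (rho emb dec f) (map (\<lambda>i. xs ! \<sigma> i) [0..<fst f])"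
      by (simp add: m1 m2)
  qed
  then show ?thesis by (simp add: rho_def minor_def)
qed

lemma rho_ops:
  assumes f: "f \<in> ops A3" and emb: "\<And>v. v \<in> A2 \<Longrightarrow> emb v \<in> A3" and dec: "\<And>z. dec z \<in> A2"
  shows "rho emb dec f \<in> ops A2"
  unfolding ops_def
proof (intro CollectI conjI allI impI)
  show "1 \<le> fst (rho emb dec f)" using ops_arity[OF f] by simp
  fix xs assume "length xs = fst (rho emb dec f) \<and> set xs \<subseteq> A2"
  then show "snd (rho emb dec f) xs \<in> A2" using rho_eval dec by simp
next
  show "ext_on A2 (fst (rho emb dec f)) (snd (rho emb dec f)) = snd (rho emb dec f)"
    by (simp add: rho_def ext_on_idem)
qed

lemma pres_const:
  "preserves f (1, {[c]}) \<longleftrightarrow> snd f (replicate (fst f) c) = c"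
proof
  assume p: "preserves f (1, {[c]})"
  have "map (\<lambda>i. snd f (map (\<lambda>j. [c] ! i) [0..<fst f])) [0..<fst (1::nat, {[c]})] \<in> snd (1::nat, {[c]})"
    using p[unfolded preserves_def, rule_format, of "\<lambda>j. [c]"] by simp
  then have "map (\<lambda>i. snd f (map (\<lambda>j. [c] ! i) [0..<fst f])) [0..<1] \<in> {[c]}" by simp
  moreover have "map (\<lambda>j. [c] ! 0) [0..<fst f] = replicate (fst f) c" by (simp add: map_replicate_trivial)
  ultimately show "snd f (replicate (fst f) c) = c" by simp
next
  assume h: "snd f (replicate (fst f) c) = c"
  show "preserves f (1, {[c]})"
    unfolding preserves_def
  proof (intro allI impI)
    fix cols assume "\<forall>j<fst f. cols j \<in> snd (1::nat, {[c]})"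
    then have "map (\<lambda>j. cols j ! 0) [0..<fst f] = replicate (fst f) c"
      by (intro nth_equalityI) auto
    then show "map (\<lambda>i. snd f (map (\<lambda>j. cols j ! i) [0..<fst f])) [0..<fst (1::nat, {[c]})] \<in> snd (1::nat, {[c]})"
      using h by simp
  qed
qed

lemma pres_neq:
  assumes f: "f \<in> ops A2"
  shows "preserves f (2, {[0,1],[1,0]}) \<longleftrightarrow>
    (\<forall>xs. length xs = fst f \<longrightarrow> set xs \<subseteq> A2 \<longrightarrow> snd f (map (\<lambda>x. 1 - x) xs) = 1 - snd f xs)"
proof
  assume p: "preserves f (2, {[0,1],[1,0]})"
  show "\<forall>xs. length xs = fst f \<longrightarrow> set xs \<subseteq> A2 \<longrightarrow> snd f (map (\<lambda>x. 1 - x) xs) = 1 - snd f xs"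
  proof (intro allI impI)
    fix xs :: "nat list" assume l: "length xs = fst f" and s: "set xs \<subseteq> A2"
    define cols where "cols = (\<lambda>j. [xs ! j, 1 - xs ! j])"
    have "cols j \<in> {[0,1],[1,0]}" if "j < fst f" for j
    proof -
      have "xs ! j \<in> set xs" using l that by simp
      then have "xs ! j \<in> A2" using s by (rule subsetD[rotated])
      then show ?thesis unfolding cols_def A2_iff by auto
    qed
    then have "map (\<lambda>i. snd f (map (\<lambda>j. cols j ! i) [0..<fst f])) [0..<fst (2::nat, {[0::nat,1],[1,0]})] \<in> snd (2::nat, {[0::nat,1],[1,0]})"
      using p[unfolded preserves_def, rule_format, of cols] by simp
    then have "map (\<lambda>i. snd f (map (\<lambda>j. cols j ! i) [0..<fst f])) [0..<2] \<in> {[0,1],[1,0]}" by simp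
    moreover have "map (\<lambda>j. cols j ! 0) [0..<fst f] = xs" by (rule nth_equalityI) (simp_all add: l cols_def)
    moreover have "map (\<lambda>j. cols j ! 1) [0..<fst f] = map (\<lambda>x. 1 - x) xs"
      by (rule nth_equalityI) (simp_all add: l cols_def)
    ultimately have "[snd f xs, snd f (map (\<lambda>x. 1 - x) xs)] \<in> {[0,1],[1,0]}" by (simp add: upt_rec)
    then show "snd f (map (\<lambda>x. 1 - x) xs) = 1 - snd f xs" by auto
  qed
next
  assume h: "\<forall>xs. length xs = fst f \<longrightarrow> set xs \<subseteq> A2 \<longrightarrow> snd f (map (\<lambda>x. 1 - x) xs) = 1 - snd f xs"
  show "preserves f (2, {[0,1],[1,0]})"
    unfolding preserves_def
  proof (intro allI impI)
    fix cols assume c: "\<forall>j<fst f. cols j \<in> snd (2::nat, {[0::nat,1],[1,0]})"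
    define xs where "xs = map (\<lambda>j. cols j ! 0) [0..<fst f]"
    have s: "set xs \<subseteq> A2" using c by (auto simp: xs_def A2_def)
    have l: "length xs = fst f" by (simp add: xs_def)
    have e1: "map (\<lambda>j. cols j ! 1) [0..<fst f] = map (\<lambda>x. 1 - x) xs"
      by (rule nth_equalityI) (use c in \<open>auto simp: xs_def\<close>)
    have fA: "snd f xs = 0 \<or> snd f xs = 1" using ops_val[OF f l s] A2_iff by simp
    have hx: "snd f (map (\<lambda>x. 1 - x) xs) = 1 - snd f xs" using h[rule_format, OF l s] .
    have m: "map (\<lambda>i. snd f (map (\<lambda>j. cols j ! i) [0..<fst f])) [0..<fst (2::nat, {[0::nat,1],[1,0]})]
       = [snd f xs, 1 - snd f xs]"
    proof -
      have u: "[0..<fst (2::nat, {[0::nat,1],[1,0]})] = [0,1]" by (simp add: upt_rec)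
      have "map (\<lambda>i. snd f (map (\<lambda>j. cols j ! i) [0..<fst f])) [0..<fst (2::nat, {[0::nat,1],[1,0]})]
        = [snd f (map (\<lambda>j. cols j ! 0) [0..<fst f]), snd f (map (\<lambda>j. cols j ! 1) [0..<fst f])]"
        unfolding u by simp
      also have "\<dots> = [snd f xs, snd f (map (\<lambda>x. 1 - x) xs)]" unfolding e1 xs_def by simp
      also have "\<dots> = [snd f xs, 1 - snd f xs]" using hx by simp
      finally show ?thesis .
    qed
    show "map (\<lambda>i. snd f (map (\<lambda>j. cols j ! i) [0..<fst f])) [0..<fst (2::nat, {[0::nat,1],[1,0]})]
       \<in> snd (2::nat, {[0::nat,1],[1,0]})"
      unfolding m using fA by auto
  qed
qed

lemma I2_iff: "f \<in> I2 \<longleftrightarrow> f \<in> ops A2 \<and> snd f (replicate (fst f) 0) = 0 \<and> snd f (replicate (fst f) 1) = 1"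
  using pres_const[of f 0] pres_const[of f 1] unfolding I2_def Pol_def by simp

lemma C2_iff: "f \<in> C2 \<longleftrightarrow> f \<in> ops A2 \<and> snd f (replicate (fst f) 0) = 0 \<and> snd f (replicate (fst f) 1) = 1
   \<and> (\<forall>xs. length xs = fst f \<longrightarrow> set xs \<subseteq> A2 \<longrightarrow> snd f (map (\<lambda>x. 1 - x) xs) = 1 - snd f xs)"
  using pres_const[of f 0] pres_const[of f 1] pres_neq[of f] unfolding C2_def Pol_def by auto


definition cb :: "nat \<Rightarrow> nat \<Rightarrow> nat \<Rightarrow> nat \<Rightarrow> nat" where
  "cb a b \<alpha> \<beta> = (if a = b then a else if a = 0 then \<alpha> else \<beta>)"

lemma map_if_pq:
  assumes s: "set x \<subseteq> {p,q}" and pq: "p \<noteq> q"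
  shows "map (\<lambda>v. h (g v)) x = map (\<lambda>v. if v = p then h (g p) else h (g q)) x"
proof (rule map_cong[OF refl])
  fix v assume "v \<in> set x"
  then have "v = p \<or> v = q" using s by auto
  then show "h (g v) = (if v = p then h (g p) else h (g q))" using pq by auto
qed

lemma sel_lemma:
  assumes "a \<in> A2" "b \<in> A2" "snd f (replicate (length x) 0) = 0" "snd f (replicate (length x) 1) = 1"
  shows "snd f (map (\<lambda>v. if v = p then a else b) x)
     = cb a b (snd f (map (\<lambda>v. if v = p then 0 else 1) x)) (snd f (map (\<lambda>v. if v = p then 1 else 0) x))"
  using assms unfolding A2_iff
  by (elim disjE; hypsubst; simp add: cb_def map_replicate_const)

lemma pair_vec:
  assumes f: "f \<in> ops A2" and i0: "snd f (replicate (fst f) 0) = 0" and i1: "snd f (replicate (fst f) 1) = 1"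
    and hc: "\<And>i v. hc i v \<in> A2" and l: "length x = fst f" and s: "set x \<subseteq> {p,q}" and pq: "p \<noteq> q"
  shows "vec k hc f (map g x) = map (\<lambda>i. cb (hc i (g p)) (hc i (g q))
            (snd f (map (\<lambda>v. if v = p then 0 else 1) x)) (snd f (map (\<lambda>v. if v = p then 1 else 0) x))) [0..<k]"
proof (rule nth_equalityI)
  show "length (vec k hc f (map g x)) = length (map (\<lambda>i. cb (hc i (g p)) (hc i (g q))
            (snd f (map (\<lambda>v. if v = p then 0 else 1) x)) (snd f (map (\<lambda>v. if v = p then 1 else 0) x))) [0..<k])"
    by (simp add: vec_def)
  fix i assume "i < length (vec k hc f (map g x))"
  then have ik: "i < k" by (simp add: vec_def)
  define a where "a = hc i (g p)"
  define b where "b = hc i (g q)"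
  have A: "a = 0 \<or> a = 1" "b = 0 \<or> b = 1" using hc[of i "g p"] hc[of i "g q"] unfolding a_def b_def A2_iff by auto
  have m: "map (hc i) (map g x) = map (\<lambda>v. if v = p then a else b) x"
  proof -
    have "map (hc i) (map g x) = map (\<lambda>v. hc i (g v)) x" by simp
    also have "\<dots> = map (\<lambda>v. if v = p then a else b) x" unfolding a_def b_def by (rule map_if_pq[OF s pq])
    finally show ?thesis .
  qed
  have e0: "vec k hc f y ! i = snd f (map (hc i) y)" for y using ik by (simp add: vec_def)
  have e: "vec k hc f (map g x) ! i = snd f (map (\<lambda>v. if v = p then a else b) x)"
    by (simp only: e0 m)
  have r: "map (\<lambda>i. cb (hc i (g p)) (hc i (g q))
            (snd f (map (\<lambda>v. if v = p then 0 else 1) x)) (snd f (map (\<lambda>v. if v = p then 1 else 0) x))) [0..<k] ! i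
         = cb a b (snd f (map (\<lambda>v. if v = p then 0 else 1) x)) (snd f (map (\<lambda>v. if v = p then 1 else 0) x))"
    using ik by (simp add: a_def b_def)
  have "snd f (map (\<lambda>v. if v = p then a else b) x)
     = cb a b (snd f (map (\<lambda>v. if v = p then 0 else 1) x)) (snd f (map (\<lambda>v. if v = p then 1 else 0) x))"
    by (rule sel_lemma) (use A i0 i1 l in \<open>auto simp: A2_iff\<close>)
  then show "vec k hc f (map g x) ! i = map (\<lambda>i. cb (hc i (g p)) (hc i (g q))
            (snd f (map (\<lambda>v. if v = p then 0 else 1) x)) (snd f (map (\<lambda>v. if v = p then 1 else 0) x))) [0..<k] ! i"
    unfolding e r .
qed

lemma const_vec:
  assumes i0: "snd f (replicate (fst f) 0) = 0" and i1: "snd f (replicate (fst f) 1) = 1"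
    and hc: "\<And>i v. hc i v \<in> A2" and l: "length x = fst f" and s: "set x \<subseteq> {p}"
  shows "vec k hc f x = map (\<lambda>i. hc i p) [0..<k]"
proof (rule nth_equalityI)
  show "length (vec k hc f x) = length (map (\<lambda>i. hc i p) [0..<k])" by (simp add: vec_def)
  fix i assume "i < length (vec k hc f x)"
  then have ik: "i < k" by (simp add: vec_def)
  have x: "x = replicate (fst f) p" using s l by (metis replicate_eqI singletonD subsetD)
  have "hc i p = 0 \<or> hc i p = 1" using hc[of i p] A2_iff by auto
  then show "vec k hc f x ! i = map (\<lambda>i. hc i p) [0..<k] ! i"
    using ik i0 i1 by (auto simp: vec_def x map_replicate_const)
qed

lemma cb01: "a \<in> A2 \<Longrightarrow> b \<in> A2 \<Longrightarrow> cb a b 0 1 = a" by (auto simp: cb_def A2_iff)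
lemma cb10: "a \<in> A2 \<Longrightarrow> b \<in> A2 \<Longrightarrow> cb a b 1 0 = b" by (auto simp: cb_def A2_iff)

lemma two_or_all:
  assumes "set xs \<subseteq> A3" "xs \<noteq> []"
  shows "set xs = A3 \<or> (\<exists>p q. p \<in> set xs \<and> q \<in> set xs \<and> set xs \<subseteq> {p,q})"
proof -
  obtain p where p: "p \<in> set xs" using assms(2) by (cases xs) auto
  show ?thesis
  proof (cases "set xs \<subseteq> {p}")
    case True then show ?thesis using p by blast
  next
    case False
    then obtain q where q: "q \<in> set xs" "q \<noteq> p" by blast
    show ?thesis
    proof (cases "set xs \<subseteq> {p,q}")
      case True then show ?thesis using p q by blast
    next
      case False
      then obtain r where r: "r \<in> set xs" "r \<noteq> p" "r \<noteq> q" by blast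
      have "set xs = A3" by (rule three_cover[OF assms(1) p q(1) r(1)]) (use q r in auto)
      then show ?thesis by simp
    qed
  qed
qed

definition nb :: "nat \<Rightarrow> nat" where "nb a = (if a = 0 then 1 else 0)"
definition nc :: "nat \<Rightarrow> nat" where "nc a = (if a = 2 then 1 else 2)"
definition hc2 :: "nat \<Rightarrow> nat \<Rightarrow> nat \<Rightarrow> nat" where
  "hc2 a i v = (if i = 0 then (if v = nc a then 1 else 0) else (if v = nb a then 0 else 1))"
definition e2 :: "nat \<Rightarrow> nat list \<Rightarrow> nat" where
  "e2 a w = (if w!0 = w!1 then (if w!0 = 0 then nb a else nc a) else a)"

lemma hc2_A2: "hc2 a i v \<in> A2" by (simp add: hc2_def A2_def)

lemma e2_A3: "a \<in> A3 \<Longrightarrow> e2 a w \<in> A3" by (auto simp: e2_def nb_def nc_def A3_def)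

lemma e2_hv: "a \<in> A3 \<Longrightarrow> v \<in> A3 \<Longrightarrow> e2 a (map (\<lambda>i. hc2 a i v) [0..<2]) = v"
  unfolding A3_iff by (elim disjE) (simp_all add: e2_def hc2_def nb_def nc_def upt_rec)

lemma hc2_swp: "a \<in> A3 \<Longrightarrow> v \<in> A3 \<Longrightarrow> hc2 a 0 (swp a v) = 1 - hc2 a 1 v \<and> hc2 a 1 (swp a v) = 1 - hc2 a 0 v"
  unfolding A3_iff by (elim disjE) (simp_all add: hc2_def nb_def nc_def swp_def)

lemma e2_swp: "a \<in> A3 \<Longrightarrow> t0 \<in> A2 \<Longrightarrow> t1 \<in> A2 \<Longrightarrow> e2 a [1 - t1, 1 - t0] = swp a (e2 a [t0, t1])"
  unfolding A3_iff A2_iff by (elim disjE) (simp_all add: e2_def nb_def nc_def swp_def)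


lemma cb_vec01: assumes "\<And>i v. hc i v \<in> A2" shows "map (\<lambda>i. cb (hc i p) (hc i q) 0 1) [0..<k] = map (\<lambda>i. hc i p) [0..<k]"
proof (rule map_cong[OF refl])
  fix i assume "i \<in> set [0..<k]"
  have "hc i p = 0 \<or> hc i p = 1" "hc i q = 0 \<or> hc i q = 1" using assms[of i] A2_iff by auto
  then show "cb (hc i p) (hc i q) 0 1 = hc i p" by (auto simp: cb_def)
qed
lemma cb_vec10: assumes "\<And>i v. hc i v \<in> A2" shows "map (\<lambda>i. cb (hc i p) (hc i q) 1 0) [0..<k] = map (\<lambda>i. hc i q) [0..<k]"
proof (rule map_cong[OF refl])
  fix i assume "i \<in> set [0..<k]"
  have "hc i p = 0 \<or> hc i p = 1" "hc i q = 0 \<or> hc i q = 1" using assms[of i] A2_iff by auto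
  then show "cb (hc i p) (hc i q) 1 0 = hc i q" by (auto simp: cb_def)
qed

lemma tr_mem: "(x, y) \<in> tr a \<longleftrightarrow> x \<in> A3 \<and> y = swp a x"
  unfolding tr_def by auto

context ctx
begin

lemma C2_D:
  assumes "f \<in> C2"
  shows "f \<in> ops A2" "snd f (replicate (fst f) 0) = 0" "snd f (replicate (fst f) 1) = 1"
    "\<And>xs. length xs = fst f \<Longrightarrow> set xs \<subseteq> A2 \<Longrightarrow> snd f (map (\<lambda>x. 1 - x) xs) = 1 - snd f xs"
  using assms unfolding C2_iff by blast+

lemma c2_pair:
  assumes f: "f \<in> C2" and a: "a \<in> A3" and l: "length x = fst f" and s: "set x \<subseteq> {p,q}" and pq: "p \<noteq> q"
    and A: "p \<in> A3" "q \<in> A3" "g p \<in> A3" "g q \<in> A3"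
  shows "(e2 a (vec 2 (hc2 a) f x), e2 a (vec 2 (hc2 a) f (map g x))) \<in> {(p, g p), (q, g q)}"
proof -
  note fo = C2_D[OF f]
  define X where "X = map (\<lambda>v. if v = p then 0 else (1::nat)) x"
  have X': "map (\<lambda>v. if v = p then 1 else 0) x = map (\<lambda>z. 1 - z) X" by (simp add: X_def comp_def)
  have XA: "set X \<subseteq> A2" "length X = fst f" by (auto simp: X_def A2_def l)
  have al: "snd f X = 0 \<or> snd f X = 1" using ops_val[OF fo(1) XA(2) XA(1)] A2_iff by simp
  have be: "snd f (map (\<lambda>v. if v = p then 1 else 0) x) = 1 - snd f X" unfolding X' by (rule fo(4)[OF _ XA(1)]) (simp add: XA)
  have v1: "vec 2 (hc2 a) f (map g x) = map (\<lambda>i. cb (hc2 a i (g p)) (hc2 a i (g q)) (snd f X) (1 - snd f X)) [0..<2]"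
    using pair_vec[where k=2 and g=g and hc="hc2 a", OF fo(1-3) hc2_A2 l s pq] be unfolding X_def by simp
  have v0: "vec 2 (hc2 a) f x = map (\<lambda>i. cb (hc2 a i p) (hc2 a i q) (snd f X) (1 - snd f X)) [0..<2]"
    using pair_vec[where k=2 and g="\<lambda>v. v" and hc="hc2 a", OF fo(1-3) hc2_A2 l s pq] be unfolding X_def by simp
  show ?thesis using al
  proof
    assume "snd f X = 0"
    then have "vec 2 (hc2 a) f x = map (\<lambda>i. hc2 a i p) [0..<2]" "vec 2 (hc2 a) f (map g x) = map (\<lambda>i. hc2 a i (g p)) [0..<2]"
      using v0 v1 cb_vec01[where hc="hc2 a", OF hc2_A2] by simp_all
    then show ?thesis using e2_hv[OF a A(1)] e2_hv[OF a A(3)] by simp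
  next
    assume "snd f X = 1"
    then have "vec 2 (hc2 a) f x = map (\<lambda>i. hc2 a i q) [0..<2]" "vec 2 (hc2 a) f (map g x) = map (\<lambda>i. hc2 a i (g q)) [0..<2]"
      using v0 v1 cb_vec10[where hc="hc2 a", OF hc2_A2] by simp_all
    then show ?thesis using e2_hv[OF a A(2)] e2_hv[OF a A(4)] by simp
  qed
qed

lemma c2_const:
  assumes f: "f \<in> C2" and a: "a \<in> A3" and l: "length x = fst f" and s: "set x \<subseteq> {p}" and p: "p \<in> A3"
  shows "e2 a (vec 2 (hc2 a) f x) = p"
  using const_vec[OF C2_D(2,3)[OF f] hc2_A2 l s] e2_hv[OF a p] by simp

lemma c2_unary:
  assumes f: "f \<in> C2" and a: "a \<in> A3" and l: "length x = fst f" and s: "set x \<subseteq> U" and U: "U \<subseteq> A3"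
  shows "e2 a (vec 2 (hc2 a) f x) \<in> U"
proof -
  have ne: "x \<noteq> []" using l ops_arity[OF C2_D(1)[OF f]] by auto
  have sA: "set x \<subseteq> A3" using s U by auto
  show ?thesis
  proof (cases "set x = A3")
    case True
    then have "U = A3" using s U by auto
    then show ?thesis using e2_A3[OF a] by simp
  next
    case False
    then obtain p q where pq: "p \<in> set x" "q \<in> set x" "set x \<subseteq> {p,q}" using two_or_all[OF sA ne] by blast
    have pA: "p \<in> A3" "q \<in> A3" using pq sA by auto
    show ?thesis
    proof (cases "p = q")
      case True
      then have "e2 a (vec 2 (hc2 a) f x) = p" using c2_const[OF f a l _ pA(1)] pq(3) by simp
      then show ?thesis using pq s by auto
    next
      case False
      have "(e2 a (vec 2 (hc2 a) f x), e2 a (vec 2 (hc2 a) f (map (\<lambda>v. v) x))) \<in> {(p, p), (q, q)}"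
        by (rule c2_pair[OF f a l pq(3) False pA pA])
      then show ?thesis using pq s by auto
    qed
  qed
qed

lemma c2_tr:
  assumes f: "f \<in> C2" and a: "a \<in> A3" and l: "length x = fst f" and s: "set x \<subseteq> A3"
  shows "e2 a (vec 2 (hc2 a) f (map (swp a) x)) = swp a (e2 a (vec 2 (hc2 a) f x))"
proof -
  note fo = C2_D[OF f]
  have sA: "set (map (hc2 a i) x) \<subseteq> A2" for i using hc2_A2 by auto
  have m0: "map (hc2 a 0) (map (swp a) x) = map (\<lambda>z. 1 - z) (map (hc2 a 1) x)"
    using hc2_swp[OF a] s by (auto intro!: map_cong)
  have m1: "map (hc2 a 1) (map (swp a) x) = map (\<lambda>z. 1 - z) (map (hc2 a 0) x)"
    using hc2_swp[OF a] s by (auto intro!: map_cong)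
  have t: "vec 2 (hc2 a) f x = [snd f (map (hc2 a 0) x), snd f (map (hc2 a 1) x)]"
    by (simp add: vec_def upt_rec)
  have vec2: "vec 2 (hc2 a) f y = [snd f (map (hc2 a 0) y), snd f (map (hc2 a 1) y)]" for y
    by (simp add: vec_def upt_rec)
  have "vec 2 (hc2 a) f (map (swp a) x) = [snd f (map (hc2 a 0) (map (swp a) x)), snd f (map (hc2 a 1) (map (swp a) x))]"
    by (rule vec2)
  also have "\<dots> = [1 - snd f (map (hc2 a 1) x), 1 - snd f (map (hc2 a 0) x)]"
    unfolding m0 m1 using fo(4)[OF _ sA] l by simp
  finally have t': "vec 2 (hc2 a) f (map (swp a) x) = [1 - snd f (map (hc2 a 1) x), 1 - snd f (map (hc2 a 0) x)]" .
  have A: "snd f (map (hc2 a 0) x) \<in> A2" "snd f (map (hc2 a 1) x) \<in> A2"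
    using ops_val[OF fo(1)] sA l by auto
  show ?thesis unfolding t t' by (rule e2_swp[OF a A])
qed

lemma xi2_C:
  assumes a: "a \<in> A3" and uniq: "\<And>a'. a' \<in> A3 \<Longrightarrow> inv2 C (tr a') \<Longrightarrow> a' = a" and f: "f \<in> C2"
  shows "xi 2 (hc2 a) (e2 a) f \<in> C"
proof (rule mem_C)
  note fo = C2_D[OF f]
  show "xi 2 (hc2 a) (e2 a) f \<in> ops A3" by (rule xi_ops[OF fo(1) hc2_A2 e2_A3[OF a]])
  fix R assume R: "inv2 C R"
  have RA: "R \<subseteq> A3 \<times> A3" using R inv2_def by auto
  show "pres2 (xi 2 (hc2 a) (e2 a) f) R"
    unfolding pres2_def xi_fst
  proof (intro allI impI)
    fix xs ys :: "nat list" assume l: "length xs = fst f" "length ys = fst f" and col: "\<forall>j<fst f. (xs ! j, ys ! j) \<in> R"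
    have colj: "(xs ! j, ys ! j) \<in> R" if "j < fst f" for j using col that by blast
    have sx: "set xs \<subseteq> fst ` R" 
    proof
      fix z assume "z \<in> set xs"
      then obtain j where j: "j < length xs" "z = xs ! j" by (metis in_set_conv_nth)
      then show "z \<in> fst ` R" using colj[of j] l by force
    qed
    have sy: "set ys \<subseteq> snd ` R" 
    proof
      fix z assume "z \<in> set ys"
      then obtain j where j: "j < length ys" "z = ys ! j" by (metis in_set_conv_nth)
      then show "z \<in> snd ` R" using colj[of j] l by force
    qed
    have fA: "fst ` R \<subseteq> A3" "snd ` R \<subseteq> A3" using RA by auto
    have xA: "set xs \<subseteq> A3" "set ys \<subseteq> A3" using subset_trans[OF sx fA(1)] subset_trans[OF sy fA(2)] .
    have ev: "snd (xi 2 (hc2 a) (e2 a) f) xs = e2 a (vec 2 (hc2 a) f xs)"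
      "snd (xi 2 (hc2 a) (e2 a) f) ys = e2 a (vec 2 (hc2 a) f ys)"
      using xi_eval l xA by auto
    have "(e2 a (vec 2 (hc2 a) f xs), e2 a (vec 2 (hc2 a) f ys)) \<in> R"
      using classify[OF R]
    proof (elim disjE exE bexE conjE)
      assume P: "R = fst ` R \<times> snd ` R"
      have "e2 a (vec 2 (hc2 a) f xs) \<in> fst ` R" by (rule c2_unary[OF f a l(1) sx]) (use RA in auto)
      moreover have "e2 a (vec 2 (hc2 a) f ys) \<in> snd ` R" by (rule c2_unary[OF f a l(2) sy]) (use RA in auto)
      ultimately show ?thesis using P by (metis mem_Sigma_iff)
    next
      fix p q p' q' assume pq: "p \<noteq> q" "p' \<noteq> q'" and Req: "R = {(p,p'),(q,q')}"
      define g where "g = (\<lambda>v. if v = p then p' else q')"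
      have A: "p \<in> A3" "q \<in> A3" "p' \<in> A3" "q' \<in> A3" using RA Req by auto
      have sx2: "set xs \<subseteq> {p,q}" using sx Req by auto
      have ys: "ys = map g xs"
      proof (rule nth_equalityI)
        show "length ys = length (map g xs)" using l by simp
        fix j assume "j < length ys"
        then have "(xs ! j, ys ! j) \<in> {(p,p'),(q,q')}" using colj l Req by auto
        then show "ys ! j = map g xs ! j" using \<open>j < length ys\<close> l pq(1) by (auto simp: g_def)
      qed
      have "(e2 a (vec 2 (hc2 a) f xs), e2 a (vec 2 (hc2 a) f (map g xs))) \<in> {(p, g p), (q, g q)}"
        by (rule c2_pair[OF f a l(1) sx2 pq(1)]) (use A pq in \<open>auto simp: g_def\<close>)
      then show ?thesis unfolding ys Req using pq(1) by (simp add: g_def)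
    next
      assume Rid: "R = Id_on A3"
      have "xs = ys"
      proof (rule nth_equalityI)
        show "length xs = length ys" using l by simp
        fix j assume "j < length xs"
        then have "(xs!j, ys!j) \<in> Id_on A3" using colj l Rid by simp
        then show "xs!j = ys!j" by auto
      qed
      then show ?thesis unfolding Rid using e2_A3[OF a, of "vec 2 (hc2 a) f ys"] by (auto intro: Id_onI)
    next
      fix a' assume a': "a' \<in> A3" and Rt: "R = tr a'"
      have aa: "a' = a" using uniq[OF a'] R Rt by simp
      have ys: "ys = map (swp a) xs"
      proof (rule nth_equalityI)
        show "length ys = length (map (swp a) xs)" using l by simp
        fix j assume "j < length ys"
        then have "(xs ! j, ys ! j) \<in> tr a" using colj l Rt aa by auto
        then show "ys ! j = map (swp a) xs ! j" using \<open>j < length ys\<close> l by (simp add: tr_mem)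
      qed
      show ?thesis unfolding ys Rt aa c2_tr[OF f a l(1) xA(1)] tr_mem using e2_A3[OF a] by simp
    qed
    then show "(snd (xi 2 (hc2 a) (e2 a) f) xs, snd (xi 2 (hc2 a) (e2 a) f) ys) \<in> R"
      unfolding ev .
  qed
qed

end


lemma rho_rep: "c \<in> A2 \<Longrightarrow> snd (rho emb dec f) (replicate (fst f) c) = dec (snd f (replicate (fst f) (emb c)))"
  by (subst rho_eval) (auto simp: A2_def)

context ctx
begin

definition dec1 :: "nat \<Rightarrow> nat" where "dec1 z = (if z = 1 then 1 else 0)"

lemma hom_C_I2: "minion_hom A3 A2 C I2 (rho (\<lambda>v. v) dec1)"
  unfolding minion_hom_def
proof (intro conjI ballI allI impI)
  fix f assume f: "f \<in> C"
  have fo: "f \<in> ops A3" by (rule opsC[OF f])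
  have "rho (\<lambda>v. v) dec1 f \<in> ops A2"
    by (rule rho_ops[OF fo]) (auto simp: dec1_def A2_def A3_def)
  moreover have "snd (rho (\<lambda>v. v) dec1 f) (replicate (fst f) 0) = 0"
    using rho_rep[of 0 "\<lambda>v. v" dec1 f] idemC[OF f, of 0]
    by (simp add: dec1_def A2_def A3_def)
  moreover have "snd (rho (\<lambda>v. v) dec1 f) (replicate (fst f) 1) = 1"
    using rho_rep[of 1 "\<lambda>v. v" dec1 f] idemC[OF f, of 1]
    by (simp add: dec1_def A2_def A3_def)
  ultimately show "rho (\<lambda>v. v) dec1 f \<in> I2" unfolding I2_iff by simp
  show "fst (rho (\<lambda>v. v) dec1 f) = fst f" by simp
next
  fix f and r :: nat and \<sigma> :: "nat \<Rightarrow> nat" assume "f \<in> C" "1 \<le> r \<and> (\<forall>i<fst f. \<sigma> i < r)"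
  then show "rho (\<lambda>v. v) dec1 (minor A3 f r \<sigma>) = minor A2 (rho (\<lambda>v. v) dec1 f) r \<sigma>"
    by (intro rho_minor) (auto simp: A2_def A3_def)
qed

lemma hom_C2_C:
  assumes a: "a \<in> A3" and uniq: "\<And>a'. a' \<in> A3 \<Longrightarrow> inv2 C (tr a') \<Longrightarrow> a' = a"
  shows "minion_hom A2 A3 C2 C (xi 2 (hc2 a) (e2 a))"
  unfolding minion_hom_def
proof (intro conjI ballI allI impI)
  fix f assume f: "f \<in> C2"
  show "xi 2 (hc2 a) (e2 a) f \<in> C" by (rule xi2_C[OF a uniq f])
  show "fst (xi 2 (hc2 a) (e2 a) f) = fst f" by simp
next
  fix f and r :: nat and \<sigma> :: "nat \<Rightarrow> nat" assume "f \<in> C2" "1 \<le> r \<and> (\<forall>i<fst f. \<sigma> i < r)"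
  then show "xi 2 (hc2 a) (e2 a) (minor A2 f r \<sigma>) = minor A3 (xi 2 (hc2 a) (e2 a) f) r \<sigma>"
    by (intro xi_minor hc2_A2) auto
qed

definition embp :: "nat \<Rightarrow> nat \<Rightarrow> nat \<Rightarrow> nat" where "embp p q z = (if z = 0 then p else q)"
definition decp :: "nat \<Rightarrow> nat \<Rightarrow> nat" where "decp p z = (if z = p then 0 else 1)"

lemma hom_C_C2:
  assumes pq: "p \<noteq> q" "p \<in> A3" "q \<in> A3" and sw: "inv2 C {(p,q),(q,p)}"
  shows "minion_hom A3 A2 C C2 (rho (embp p q) (decp p))"
  unfolding minion_hom_def
proof (intro conjI ballI allI impI)
  fix f assume f: "f \<in> C"
  have fo: "f \<in> ops A3" by (rule opsC[OF f])
  have emb: "embp p q v \<in> A3" for v using pq by (simp add: embp_def)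
  have U: "inv1 C {p,q}"
  proof -
    have "fst ` {(p,q),(q,p)} = {p,q}" by auto
    then show ?thesis using inv1_dom[OF sw] by simp
  qed
  have ro: "rho (embp p q) (decp p) f \<in> ops A2"
    by (rule rho_ops[OF fo]) (auto simp: decp_def A2_def emb)
  have r0: "snd (rho (embp p q) (decp p) f) (replicate (fst f) 0) = 0"
    using rho_rep[of 0 "embp p q" "decp p" f] idemC[OF f pq(2)]
    by (simp add: decp_def embp_def A2_def)
  have r1: "snd (rho (embp p q) (decp p) f) (replicate (fst f) 1) = 1"
    using rho_rep[of 1 "embp p q" "decp p" f] idemC[OF f pq(3)] pq(1)
    by (simp add: decp_def embp_def A2_def)
  have sd: "snd (rho (embp p q) (decp p) f) (map (\<lambda>x. 1 - x) xs) = 1 - snd (rho (embp p q) (decp p) f) xs"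
    if l: "length xs = fst f" and s: "set xs \<subseteq> A2" for xs
  proof -
    define ys where "ys = map (embp p q) xs"
    define zs where "zs = map (embp p q) (map (\<lambda>x. 1 - x) xs)"
    have ly: "length ys = fst f" "length zs = fst f" using l by (simp_all add: ys_def zs_def)
    have sy: "set ys \<subseteq> {p,q}" by (auto simp: ys_def embp_def)
    have col: "(ys ! j, zs ! j) \<in> {(p,q),(q,p)}" if "j < fst f" for j
    proof -
      have "xs ! j \<in> set xs" using that l by simp
      then have "xs ! j = 0 \<or> xs ! j = 1" using s A2_iff by auto
      then show ?thesis using that l by (auto simp: ys_def zs_def embp_def)
    qed
    have "(snd f ys, snd f zs) \<in> {(p,q),(q,p)}" by (rule inv2D[OF sw f ly]) (rule col)
    moreover have zs2: "set (map (\<lambda>x. 1 - x) xs) \<subseteq> A2" using s by (auto simp: A2_def)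
    ultimately show ?thesis
      using rho_eval[OF _ s, of f "embp p q" "decp p"] rho_eval[OF _ zs2, of f "embp p q" "decp p"] l pq(1)
      unfolding ys_def zs_def by (auto simp: decp_def)
  qed
  show "rho (embp p q) (decp p) f \<in> C2" unfolding C2_iff using ro r0 r1 sd by simp
  show "fst (rho (embp p q) (decp p) f) = fst f" by simp
next
  fix f and r :: nat and \<sigma> :: "nat \<Rightarrow> nat" assume "f \<in> C" "1 \<le> r \<and> (\<forall>i<fst f. \<sigma> i < r)"
  then show "rho (embp p q) (decp p) (minor A3 f r \<sigma>) = minor A2 (rho (embp p q) (decp p) f) r \<sigma>"
    by (intro rho_minor) (use pq in \<open>auto simp: embp_def\<close>)
qed

end


definition Sl :: "nat set list" where "Sl = [{0},{1},{2},{0,1},{0,2},{1,2}]"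
definition hc6 :: "nat \<Rightarrow> nat \<Rightarrow> nat" where "hc6 i v = (if v \<in> Sl ! i then 1 else 0)"

definition e6 :: "nat \<Rightarrow> nat \<Rightarrow> nat \<Rightarrow> nat \<Rightarrow> nat list \<Rightarrow> nat" where
 "e6 o01 o02 o12 d t = (if t = [1,0,0,1,1,0] then 0 else if t = [0,1,0,1,0,1] then 1 else if t = [0,0,1,0,1,1] then 2
    else if t = [0,0,0,1,0,0] \<or> t = [1,1,0,1,1,1] then o01
    else if t = [0,0,0,0,1,0] \<or> t = [1,0,1,1,1,1] then o02
    else if t = [0,0,0,0,0,1] \<or> t = [0,1,1,1,1,1] then o12 else d)"

lemma hc6_A2: "hc6 i v \<in> A2" by (simp add: hc6_def A2_def)

lemma hc6_vals: "hc6 0 v = (if v = 0 then 1 else 0)" "hc6 1 v = (if v = 1 then 1 else 0)"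
  "hc6 2 v = (if v = 2 then 1 else 0)" "hc6 3 v = (if v = 0 \<or> v = 1 then 1 else 0)"
  "hc6 4 v = (if v = 0 \<or> v = 2 then 1 else 0)" "hc6 5 v = (if v = 1 \<or> v = 2 then 1 else 0)"
  by (auto simp: hc6_def Sl_def)

lemma upt6: "[0..<6] = [0,1,2,3,4,5::nat]" by (simp add: upt_rec)

lemma map6: "map h [0..<6] = [h 0, h 1, h 2, h 3, h 4, h (5::nat)]"
  unfolding upt6 by simp

definition oo3 :: "nat \<Rightarrow> nat \<Rightarrow> nat \<Rightarrow> nat \<Rightarrow> nat \<Rightarrow> nat" where
  "oo3 o01 o02 o12 p q = (if p + q = 1 then o01 else if p + q = 2 then o02 else o12)"

lemma e6_pair:
  assumes "p \<noteq> q" "p \<in> A3" "q \<in> A3" "\<alpha> \<in> A2" "\<beta> \<in> A2"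
  shows "e6 o01 o02 o12 d (map (\<lambda>i. cb (hc6 i p) (hc6 i q) \<alpha> \<beta>) [0..<6])
    = (if \<alpha> = 0 \<and> \<beta> = 1 then p else if \<alpha> = 1 \<and> \<beta> = 0 then q else oo3 o01 o02 o12 p q)"
  using assms unfolding A3_iff A2_iff map6 hc6_vals
  by (elim disjE) (simp_all add: cb_def e6_def oo3_def)

lemma e6_hv: "v \<in> A3 \<Longrightarrow> e6 o01 o02 o12 d (map (\<lambda>i. hc6 i v) [0..<6]) = v"
  unfolding A3_iff map6 hc6_vals by (elim disjE) (simp_all add: e6_def)

definition SL :: "nat list list" where
  "SL = [[1,0,0,1,1,0],[0,1,0,1,0,1],[0,0,1,0,1,1],[0,0,0,1,0,0],[1,1,0,1,1,1],[0,0,0,0,1,0],[1,0,1,1,1,1],[0,0,0,0,0,1],[0,1,1,1,1,1]]"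

lemma e6_nonspecial: "t \<notin> set SL \<Longrightarrow> e6 o01 o02 o12 d t = d"
  by (simp add: e6_def SL_def)

definition pl :: "nat \<Rightarrow> nat list" where
  "pl a = (if a = 0 then [0,2,1,4,3,5] else if a = 1 then [2,1,0,5,4,3] else [1,0,2,3,5,4])"

definition permv :: "nat \<Rightarrow> nat list \<Rightarrow> nat list" where
  "permv a t = map (\<lambda>i. t ! (pl a ! i)) [0..<6]"

lemma swp_vals: "swp 0 0 = 0" "swp 0 1 = 2" "swp 0 2 = 1" "swp 1 0 = 2" "swp 1 1 = 1" "swp 1 2 = 0"
  "swp 2 0 = 1" "swp 2 1 = 0" "swp 2 2 = 2" by (simp_all add: swp_def)

lemma list6: "length t = 6 \<Longrightarrow> t = [t!0, t!1, t!2, t!3, t!4, t!5]"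
  by (rule nth_equalityI) (auto simp: less_Suc_eq numeral_eq_Suc)

lemma permv_vals: "permv 0 t = [t!0, t!2, t!1, t!4, t!3, t!5]" "permv 1 t = [t!2, t!1, t!0, t!5, t!4, t!3]"
  "permv 2 t = [t!1, t!0, t!2, t!3, t!5, t!4]"
  by (simp_all add: permv_def pl_def map6)

lemma permv_inv:
  assumes "length t = 6" "a \<in> A3" shows "permv a (permv a t) = t"
proof -
  have "permv a (permv a t) = [t!0, t!1, t!2, t!3, t!4, t!5]"
    using assms(2) unfolding A3_iff by (elim disjE) (simp_all add: permv_vals permv_vals[simplified])
  also have "\<dots> = t" by (rule list6[OF assms(1), symmetric])
  finally show ?thesis .
qed

lemma permv_SL: "s \<in> set SL \<Longrightarrow> a \<in> A3 \<Longrightarrow> permv a s \<in> set SL"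
  unfolding A3_iff SL_def set_simps by (elim disjE insertE emptyE; simp add: permv_vals permv_vals[simplified])

definition Hok :: "nat \<Rightarrow> nat \<Rightarrow> nat \<Rightarrow> nat \<Rightarrow> nat \<Rightarrow> bool" where
  "Hok a o01 o02 o12 d \<longleftrightarrow> swp a d = d
    \<and> (a = 0 \<longrightarrow> swp 0 o01 = o02 \<and> swp 0 o02 = o01 \<and> swp 0 o12 = o12)
    \<and> (a = 1 \<longrightarrow> swp 1 o01 = o12 \<and> swp 1 o12 = o01 \<and> swp 1 o02 = o02)
    \<and> (a = 2 \<longrightarrow> swp 2 o02 = o12 \<and> swp 2 o12 = o02 \<and> swp 2 o01 = o01)"

lemma e6_equiv:
  assumes a: "a \<in> A3" and l: "length t = 6" and H: "Hok a o01 o02 o12 d"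
  shows "e6 o01 o02 o12 d (permv a t) = swp a (e6 o01 o02 o12 d t)"
proof (cases "t \<in> set SL")
  case True
  then show ?thesis using a H unfolding A3_iff SL_def set_simps Hok_def
    by (elim disjE insertE emptyE; simp add: permv_vals permv_vals[simplified] e6_def swp_vals swp_vals[simplified])
next
  case False
  have "permv a t \<notin> set SL"
  proof
    assume "permv a t \<in> set SL"
    then have "permv a (permv a t) \<in> set SL" by (rule permv_SL[OF _ a])
    then show False using False permv_inv[OF l a] by simp
  qed
  then show ?thesis using e6_nonspecial[OF False] e6_nonspecial[of "permv a t"] H by (simp add: Hok_def)
qed


lemma hc6_swp: "a \<in> A3 \<Longrightarrow> v \<in> A3 \<Longrightarrow> i < 6 \<Longrightarrow> hc6 i (swp a v) = hc6 (pl a ! i) v"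
proof -
  assume a: "a \<in> A3" and v: "v \<in> A3" and i: "i < 6"
  have "i \<in> set [0..<6]" using i by simp
  then have "i \<in> set [0,1,2,3,4,5]" unfolding upt6 .
  then have "i = 0 \<or> i = 1 \<or> i = 2 \<or> i = 3 \<or> i = 4 \<or> i = 5" by simp
  then show ?thesis using a v unfolding A3_iff
    by (elim disjE; simp add: hc6_vals hc6_vals[simplified] pl_def swp_def)
qed

lemma oo3_eq:
  assumes "p \<noteq> q" "p \<in> A3" "q \<in> A3" and sym: "\<And>x y. ob x y = ob y x"
  shows "oo3 (ob 0 1) (ob 0 2) (ob 1 2) p q = ob p q"
  using assms(1-3) unfolding A3_iff
  by (elim disjE) (simp_all add: oo3_def sym[of 1 0] sym[of 2 0] sym[of 2 1] sym[of "Suc 0" 0] sym[of 2 "Suc 0"])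

context ctx
begin

definition dflt :: nat where
  "dflt = (if \<exists>a\<in>A3. inv2 C (tr a) then (SOME a. a \<in> A3 \<and> inv2 C (tr a)) else 0)"

lemma dflt_A3: "dflt \<in> A3"
proof (cases "\<exists>a\<in>A3. inv2 C (tr a)")
  case True
  then have "(SOME a. a \<in> A3 \<and> inv2 C (tr a)) \<in> A3 \<and> inv2 C (tr (SOME a. a \<in> A3 \<and> inv2 C (tr a)))"
    by (metis (mono_tags, lifting) someI_ex)
  then show ?thesis using True by (simp add: dflt_def)
qed (simp add: dflt_def A3_def)

lemma dflt_fix: assumes "a \<in> A3" "inv2 C (tr a)" shows "dflt = a"
proof -
  have ex: "\<exists>a\<in>A3. inv2 C (tr a)" using assms by blast
  then have "(SOME a. a \<in> A3 \<and> inv2 C (tr a)) \<in> A3 \<and> inv2 C (tr (SOME a. a \<in> A3 \<and> inv2 C (tr a)))"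
    by (metis (mono_tags, lifting) someI_ex)
  then have "(SOME a. a \<in> A3 \<and> inv2 C (tr a)) = a" using tr_unique assms by blast
  then show ?thesis using ex by (simp add: dflt_def)
qed

definition oB :: "nat operation \<Rightarrow> nat \<Rightarrow> nat \<Rightarrow> nat" where
  "oB w p q = (if inv1 C {p,q} then snd w [p,q] else dflt)"

lemma oB_sym:
  assumes comm: "\<And>p q. p \<in> A3 \<Longrightarrow> q \<in> A3 \<Longrightarrow> p \<noteq> q \<Longrightarrow> inv1 C {p,q} \<Longrightarrow> snd w [p,q] = snd w [q,p]"
  shows "oB w p q = oB w q p"
proof (cases "inv1 C {p,q}")
  case True
  then have pq: "p \<in> A3" "q \<in> A3" unfolding inv1_def by auto
  have "{q,p} = {p,q}" by auto
  then show ?thesis using True comm[OF pq] by (cases "p = q") (auto simp: oB_def)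
next
  case False
  have "{q,p} = {p,q}" by auto
  then show ?thesis using False by (simp add: oB_def)
qed

lemma oB_A3: assumes "w \<in> C" "fst w = 2" "p \<in> A3" "q \<in> A3" shows "oB w p q \<in> A3"
  using valC[OF assms(1), of "[p,q]"] assms dflt_A3 by (simp add: oB_def)

lemma oB_sub: assumes "w \<in> C" "fst w = 2" "inv1 C {p,q}" shows "oB w p q \<in> {p,q}"
  using inv1D[OF assms(3,1), of "[p,q]"] assms by (simp add: oB_def)

lemma oB_swp:
  assumes w: "w \<in> C" "fst w = 2" and a: "a \<in> A3" and t: "inv2 C (tr a)" and pq: "p \<in> A3" "q \<in> A3"
  shows "oB w (swp a p) (swp a q) = swp a (oB w p q)"
proof -
  have sw: "swp a (swp a x) = x" if "x \<in> A3" for x using that a unfolding A3_iff by (auto simp: swp_def)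
  have swA: "swp a x \<in> A3" if "x \<in> A3" for x using that a unfolding A3_iff by (auto simp: swp_def)
  have img: "tr a `` {x,y} = {swp a x, swp a y}" if "x \<in> A3" "y \<in> A3" for x y
    using that by (auto simp: tr_mem)
  have iff: "inv1 C {swp a p, swp a q} \<longleftrightarrow> inv1 C {p,q}"
  proof
    assume "inv1 C {p,q}"
    then show "inv1 C {swp a p, swp a q}" using inv1_image[OF _ t] img[OF pq] by metis
  next
    assume h: "inv1 C {swp a p, swp a q}"
    have "tr a `` {swp a p, swp a q} = {p,q}" using img[OF swA[OF pq(1)] swA[OF pq(2)]] sw pq by simp
    then show "inv1 C {p,q}" using inv1_image[OF h t] by metis
  qed
  show ?thesis
  proof (cases "inv1 C {p,q}")
    case True
    have "(snd w [p,q], snd w [swp a p, swp a q]) \<in> tr a"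
    proof (rule inv2D[OF t w(1)])
      fix j assume "j < fst w"
      then have "j = 0 \<or> j = 1" using w(2) by auto
      then show "([p,q] ! j, [swp a p, swp a q] ! j) \<in> tr a" using pq by (auto simp: tr_mem)
    qed (simp_all add: w(2))
    then show ?thesis using True iff by (simp add: oB_def tr_mem)
  next
    case False
    then show ?thesis using iff dflt_fix[OF a t] a by (simp add: oB_def swp_def)
  qed
qed

lemma E6_A3: assumes "w \<in> C" "fst w = 2" shows "e6 (oB w 0 1) (oB w 0 2) (oB w 1 2) dflt t \<in> A3"
proof -
  have "oB w 0 1 \<in> A3" "oB w 0 2 \<in> A3" "oB w 1 2 \<in> A3" using oB_A3[OF assms] by (auto simp: A3_def)
  then show ?thesis using dflt_A3 by (simp add: e6_def A3_def)
qed

lemma I2_D: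
  assumes "f \<in> I2"
  shows "f \<in> ops A2" "snd f (replicate (fst f) 0) = 0" "snd f (replicate (fst f) 1) = 1"
  using assms unfolding I2_iff by blast+

lemma b_pair:
  assumes f: "f \<in> I2" and w: "w \<in> C" "fst w = 2"
    and comm: "\<And>p q. p \<in> A3 \<Longrightarrow> q \<in> A3 \<Longrightarrow> p \<noteq> q \<Longrightarrow> inv1 C {p,q} \<Longrightarrow> snd w [p,q] = snd w [q,p]"
    and l: "length x = fst f" and s: "set x \<subseteq> {p,q}" and pq: "p \<noteq> q"
    and A: "p \<in> A3" "q \<in> A3" "g p \<in> A3" "g q \<in> A3" and gpq: "g p \<noteq> g q"
  shows "(e6 (oB w 0 1) (oB w 0 2) (oB w 1 2) dflt (vec 6 hc6 f x),
          e6 (oB w 0 1) (oB w 0 2) (oB w 1 2) dflt (vec 6 hc6 f (map g x)))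
     \<in> {(p, g p), (q, g q), (oB w p q, oB w (g p) (g q))}"
proof -
  note fo = I2_D[OF f]
  define al where "al = snd f (map (\<lambda>v. if v = p then 0 else 1) x)"
  define be where "be = snd f (map (\<lambda>v. if v = p then 1 else 0) x)"
  have alA: "al \<in> A2" unfolding al_def by (rule ops_val[OF fo(1)]) (auto simp: l A2_def)
  have beA: "be \<in> A2" unfolding be_def by (rule ops_val[OF fo(1)]) (auto simp: l A2_def)
  have v1: "vec 6 hc6 f (map g x) = map (\<lambda>i. cb (hc6 i (g p)) (hc6 i (g q)) al be) [0..<6]"
    unfolding al_def be_def by (rule pair_vec[OF fo(1-3) hc6_A2 l s pq])
  have v0: "vec 6 hc6 f x = map (\<lambda>i. cb (hc6 i p) (hc6 i q) al be) [0..<6]"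
    using pair_vec[where g="\<lambda>v. v", OF fo(1-3) hc6_A2 l s pq] unfolding al_def be_def by simp
  have sym: "oB w x y = oB w y x" for x y by (rule oB_sym[OF comm])
  have o1: "oo3 (oB w 0 1) (oB w 0 2) (oB w 1 2) p q = oB w p q" by (rule oo3_eq[OF pq A(1,2) sym])
  have o2: "oo3 (oB w 0 1) (oB w 0 2) (oB w 1 2) (g p) (g q) = oB w (g p) (g q)" by (rule oo3_eq[OF gpq A(3,4) sym])
  show ?thesis
    unfolding v0 v1 e6_pair[OF pq A(1,2) alA beA] e6_pair[OF gpq A(3,4) alA beA] o1 o2 by auto
qed

lemma three_sub:
  assumes "U \<subseteq> A3" "p \<in> U" "q \<in> U" "p \<noteq> q" "U \<noteq> A3"
  shows "U = {p,q}"
proof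
  show "{p,q} \<subseteq> U" using assms by auto
  show "U \<subseteq> {p,q}"
  proof
    fix z assume z: "z \<in> U"
    show "z \<in> {p,q}"
    proof (rule ccontr)
      assume "z \<notin> {p,q}"
      then have "U = A3" using three_cover[OF assms(1-3) z assms(4)] by auto
      then show False using assms(5) by simp
    qed
  qed
qed

lemma b_unary:
  assumes f: "f \<in> I2" and w: "w \<in> C" "fst w = 2"
    and comm: "\<And>p q. p \<in> A3 \<Longrightarrow> q \<in> A3 \<Longrightarrow> p \<noteq> q \<Longrightarrow> inv1 C {p,q} \<Longrightarrow> snd w [p,q] = snd w [q,p]"
    and l: "length x = fst f" and s: "set x \<subseteq> U" and U: "inv1 C U"
  shows "e6 (oB w 0 1) (oB w 0 2) (oB w 1 2) dflt (vec 6 hc6 f x) \<in> U"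
proof -
  note fo = I2_D[OF f]
  have UA: "U \<subseteq> A3" using U inv1_def by auto
  have ne: "x \<noteq> []" using l ops_arity[OF fo(1)] by auto
  have sA: "set x \<subseteq> A3" using s UA by auto
  show ?thesis
  proof (cases "U = A3")
    case True
    then show ?thesis using E6_A3[OF w] by simp
  next
    case UN: False
    have "set x \<noteq> A3" using UN s UA by auto
    then obtain p q where pq: "p \<in> set x" "q \<in> set x" "set x \<subseteq> {p,q}" using two_or_all[OF sA ne] by blast
    have pA: "p \<in> A3" "q \<in> A3" using pq sA by auto
    show ?thesis
    proof (cases "p = q")
      case True
      have "vec 6 hc6 f x = map (\<lambda>i. hc6 i p) [0..<6]"
        by (rule const_vec[OF fo(2,3) hc6_A2 l]) (use pq True in auto)
      then show ?thesis using e6_hv[OF pA(1)] pq s by auto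
    next
      case False
      have Ueq: "U = {p,q}" by (rule three_sub[OF UA _ _ False UN]) (use pq s in auto)
      have "oB w p q \<in> {p,q}" by (rule oB_sub[OF w]) (use U Ueq in simp)
      moreover have "(e6 (oB w 0 1) (oB w 0 2) (oB w 1 2) dflt (vec 6 hc6 f x),
          e6 (oB w 0 1) (oB w 0 2) (oB w 1 2) dflt (vec 6 hc6 f (map (\<lambda>v. v) x)))
         \<in> {(p, p), (q, q), (oB w p q, oB w p q)}"
        by (rule b_pair[OF f w comm l pq(3) False pA pA False])
      ultimately show ?thesis using Ueq by auto
    qed
  qed
qed

lemma pl_lt: "a \<in> A3 \<Longrightarrow> i < 6 \<Longrightarrow> pl a ! i < 6"
proof -
  assume a: "a \<in> A3" and i: "i < 6"
  have "i \<in> set [0..<6]" using i by simp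
  then have "i \<in> set [0,1,2,3,4,5]" unfolding upt6 .
  then have "i = 0 \<or> i = 1 \<or> i = 2 \<or> i = 3 \<or> i = 4 \<or> i = 5" by simp
  then show ?thesis using a unfolding A3_iff by (elim disjE; simp add: pl_def)
qed

lemma vec_swp:
  assumes a: "a \<in> A3" and s: "set x \<subseteq> A3"
  shows "vec 6 hc6 f (map (swp a) x) = permv a (vec 6 hc6 f x)"
proof (rule nth_equalityI)
  show "length (vec 6 hc6 f (map (swp a) x)) = length (permv a (vec 6 hc6 f x))"
    by (simp add: vec_def permv_def)
  fix i assume "i < length (vec 6 hc6 f (map (swp a) x))"
  then have i: "i < 6" by (simp add: vec_def)
  have m: "map (hc6 i) (map (swp a) x) = map (hc6 (pl a ! i)) x"
  proof -
    have "map (hc6 i) (map (swp a) x) = map (\<lambda>v. hc6 i (swp a v)) x" by simp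
    also have "\<dots> = map (hc6 (pl a ! i)) x"
    proof (rule map_cong[OF refl])
      fix v assume "v \<in> set x"
      then have "v \<in> A3" using s by auto
      then show "hc6 i (swp a v) = hc6 (pl a ! i) v" by (rule hc6_swp[OF a _ i])
    qed
    finally show ?thesis .
  qed
  have "vec 6 hc6 f (map (swp a) x) ! i = snd f (map (hc6 i) (map (swp a) x))" using i by (simp add: vec_def del: map_map)
  also have "\<dots> = snd f (map (hc6 (pl a ! i)) x)" unfolding m ..
  also have "\<dots> = vec 6 hc6 f x ! (pl a ! i)" using pl_lt[OF a i] by (simp add: vec_def)
  also have "\<dots> = permv a (vec 6 hc6 f x) ! i" using i by (simp add: permv_def)
  finally show "vec 6 hc6 f (map (swp a) x) ! i = permv a (vec 6 hc6 f x) ! i" .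
qed

lemma Hok_w:
  assumes w: "w \<in> C" "fst w = 2" and a: "a \<in> A3" and t: "inv2 C (tr a)"
    and comm: "\<And>p q. p \<in> A3 \<Longrightarrow> q \<in> A3 \<Longrightarrow> p \<noteq> q \<Longrightarrow> inv1 C {p,q} \<Longrightarrow> snd w [p,q] = snd w [q,p]"
  shows "Hok a (oB w 0 1) (oB w 0 2) (oB w 1 2) dflt"
proof -
  have sym: "oB w x y = oB w y x" for x y by (rule oB_sym[OF comm])
  have s01: "swp a (oB w 0 1) = oB w (swp a 0) (swp a 1)" using oB_swp[OF w a t, of 0 1] by (simp add: A3_def)
  have s02: "swp a (oB w 0 2) = oB w (swp a 0) (swp a 2)" using oB_swp[OF w a t, of 0 2] by (simp add: A3_def)
  have s12: "swp a (oB w 1 2) = oB w (swp a 1) (swp a 2)" using oB_swp[OF w a t, of 1 2] by (simp add: A3_def)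
  have d: "swp a dflt = dflt" using dflt_fix[OF a t] by (simp add: swp_def)
  show ?thesis using a s01 s02 s12 d unfolding A3_iff Hok_def
    by (elim disjE) (simp_all add: swp_vals swp_vals[simplified] sym[of 2 0] sym[of 2 "Suc 0"] sym[of "Suc 0" 0])
qed

end


context ctx
begin

lemma xi6_C:
  assumes w: "w \<in> C" "fst w = 2"
    and comm: "\<And>p q. p \<in> A3 \<Longrightarrow> q \<in> A3 \<Longrightarrow> p \<noteq> q \<Longrightarrow> inv1 C {p,q} \<Longrightarrow> snd w [p,q] = snd w [q,p]"
    and f: "f \<in> I2"
  shows "xi 6 hc6 (e6 (oB w 0 1) (oB w 0 2) (oB w 1 2) dflt) f \<in> C"
proof (rule mem_C)
  note fo = I2_D[OF f]
  let ?e = "e6 (oB w 0 1) (oB w 0 2) (oB w 1 2) dflt"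
  show "xi 6 hc6 ?e f \<in> ops A3" by (rule xi_ops[OF fo(1) hc6_A2 E6_A3[OF w]])
  fix R assume R: "inv2 C R"
  have RA: "R \<subseteq> A3 \<times> A3" using R inv2_def by auto
  show "pres2 (xi 6 hc6 ?e f) R"
    unfolding pres2_def xi_fst
  proof (intro allI impI)
    fix xs ys :: "nat list" assume l: "length xs = fst f" "length ys = fst f" and col: "\<forall>j<fst f. (xs ! j, ys ! j) \<in> R"
    have colj: "(xs ! j, ys ! j) \<in> R" if "j < fst f" for j using col that by blast
    have sx: "set xs \<subseteq> fst ` R" 
    proof
      fix z assume "z \<in> set xs"
      then obtain j where j: "j < length xs" "z = xs ! j" by (metis in_set_conv_nth)
      then show "z \<in> fst ` R" using colj[of j] l by force
    qed
    have sy: "set ys \<subseteq> snd ` R" 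
    proof
      fix z assume "z \<in> set ys"
      then obtain j where j: "j < length ys" "z = ys ! j" by (metis in_set_conv_nth)
      then show "z \<in> snd ` R" using colj[of j] l by force
    qed
    have fA: "fst ` R \<subseteq> A3" "snd ` R \<subseteq> A3" using RA by auto
    have xA: "set xs \<subseteq> A3" "set ys \<subseteq> A3" using subset_trans[OF sx fA(1)] subset_trans[OF sy fA(2)] .
    have ev: "snd (xi 6 hc6 ?e f) xs = ?e (vec 6 hc6 f xs)"
      "snd (xi 6 hc6 ?e f) ys = ?e (vec 6 hc6 f ys)"
      using xi_eval l xA by auto
    have "(?e (vec 6 hc6 f xs), ?e (vec 6 hc6 f ys)) \<in> R"
      using classify[OF R]
    proof (elim disjE exE bexE conjE)
      assume P: "R = fst ` R \<times> snd ` R"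
      have "?e (vec 6 hc6 f xs) \<in> fst ` R" by (rule b_unary[OF f w comm l(1) sx inv1_dom[OF R]])
      moreover have "?e (vec 6 hc6 f ys) \<in> snd ` R" by (rule b_unary[OF f w comm l(2) sy inv1_ran[OF R]])
      ultimately show ?thesis using P by (metis mem_Sigma_iff)
    next
      fix p q p' q' assume pq: "p \<noteq> q" "p' \<noteq> q'" and Req: "R = {(p,p'),(q,q')}"
      define g where "g = (\<lambda>v. if v = p then p' else q')"
      have A: "p \<in> A3" "q \<in> A3" "p' \<in> A3" "q' \<in> A3" using RA Req by auto
      have sx2: "set xs \<subseteq> {p,q}" using sx Req by auto
      have ys: "ys = map g xs"
      proof (rule nth_equalityI)
        show "length ys = length (map g xs)" using l by simp
        fix j assume "j < length ys"
        then have "(xs ! j, ys ! j) \<in> {(p,p'),(q,q')}" using colj l Req by auto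
        then show "ys ! j = map g xs ! j" using \<open>j < length ys\<close> l pq(1) by (auto simp: g_def)
      qed
      have gv: "g p = p'" "g q = q'" using pq(1) by (auto simp: g_def)
      have U1: "inv1 C {p,q}" using inv1_dom[OF R] Req by simp
      have U2: "inv1 C {p',q'}" using inv1_ran[OF R] Req by simp
      have ww: "(snd w [p,q], snd w [p',q']) \<in> R"
      proof (rule inv2D[OF R w(1)])
        fix j assume "j < fst w"
        then have "j = 0 \<or> j = 1" using w(2) by auto
        then show "([p,q] ! j, [p',q'] ! j) \<in> R" using Req by auto
      qed (simp_all add: w(2))
      have "(?e (vec 6 hc6 f xs), ?e (vec 6 hc6 f (map g xs))) \<in> {(p, g p), (q, g q), (oB w p q, oB w (g p) (g q))}"
        by (rule b_pair[OF f w comm l(1) sx2 pq(1) A(1,2)]) (use A gv pq in auto)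
      then show ?thesis unfolding ys[symmetric] gv using ww U1 U2 Req by (auto simp: oB_def)
    next
      assume Rid: "R = Id_on A3"
      have "xs = ys"
      proof (rule nth_equalityI)
        show "length xs = length ys" using l by simp
        fix j assume "j < length xs"
        then have "(xs!j, ys!j) \<in> Id_on A3" using colj l Rid by simp
        then show "xs!j = ys!j" by auto
      qed
      then show ?thesis unfolding Rid using E6_A3[OF w, of "vec 6 hc6 f ys"] by auto
    next
      fix a assume a: "a \<in> A3" and Rt: "R = tr a"
      have t: "inv2 C (tr a)" using R Rt by simp
      have ys: "ys = map (swp a) xs"
      proof (rule nth_equalityI)
        show "length ys = length (map (swp a) xs)" using l by simp
        fix j assume "j < length ys"
        then have "(xs ! j, ys ! j) \<in> tr a" using colj l Rt by auto
        then show "ys ! j = map (swp a) xs ! j" using \<open>j < length ys\<close> l by (simp add: tr_mem)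
      qed
      have len: "length (vec 6 hc6 f xs) = 6" by (simp add: vec_def)
      have "?e (vec 6 hc6 f ys) = swp a (?e (vec 6 hc6 f xs))"
        unfolding ys vec_swp[OF a xA(1)] by (rule e6_equiv[OF a len Hok_w[OF w a t comm]])
      then show ?thesis unfolding Rt tr_mem using E6_A3[OF w] by simp
    qed
    then show "(snd (xi 6 hc6 ?e f) xs, snd (xi 6 hc6 ?e f) ys) \<in> R"
      unfolding ev .
  qed
qed

lemma hom_I2_C:
  assumes w: "w \<in> C" "fst w = 2"
    and comm: "\<And>p q. p \<in> A3 \<Longrightarrow> q \<in> A3 \<Longrightarrow> p \<noteq> q \<Longrightarrow> inv1 C {p,q} \<Longrightarrow> snd w [p,q] = snd w [q,p]"
  shows "minion_hom A2 A3 I2 C (xi 6 hc6 (e6 (oB w 0 1) (oB w 0 2) (oB w 1 2) dflt))"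
  unfolding minion_hom_def
proof (intro conjI ballI allI impI)
  fix f assume f: "f \<in> I2"
  show "xi 6 hc6 (e6 (oB w 0 1) (oB w 0 2) (oB w 1 2) dflt) f \<in> C" by (rule xi6_C[OF w comm f])
  show "fst (xi 6 hc6 (e6 (oB w 0 1) (oB w 0 2) (oB w 1 2) dflt) f) = fst f" by simp
next
  fix f and r :: nat and \<sigma> :: "nat \<Rightarrow> nat" assume "f \<in> I2" "1 \<le> r \<and> (\<forall>i<fst f. \<sigma> i < r)"
  then show "xi 6 hc6 (e6 (oB w 0 1) (oB w 0 2) (oB w 1 2) dflt) (minor A2 f r \<sigma>)
      = minor A3 (xi 6 hc6 (e6 (oB w 0 1) (oB w 0 2) (oB w 1 2) dflt) f) r \<sigma>"
    by (intro xi_minor hc6_A2) auto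
qed

end


lemma upt2: "[0..<2] = [0,1::nat]" by (simp add: upt_rec)

context ctx
begin

definition comb :: "nat operation \<Rightarrow> nat operation \<Rightarrow> nat operation" where
  "comb v w = comp_op A3 v 2 (\<lambda>i. if i = 0 then w else comp_op A3 w 2 (\<lambda>j. proj A3 2 (1 - j)))"

lemma swapped_C: assumes "w \<in> C" "fst w = 2" shows "comp_op A3 w 2 (\<lambda>j. proj A3 2 (1 - j)) \<in> C"
  by (rule clone_comp[OF cl assms(1)]) (use clone_proj[OF cl] assms(2) in auto)

lemma comb_C: assumes "v \<in> C" "fst v = 2" "w \<in> C" "fst w = 2" shows "comb v w \<in> C" "fst (comb v w) = 2"
proof -
  show "comb v w \<in> C" unfolding comb_def
    by (rule clone_comp[OF cl assms(1)]) (use assms swapped_C[OF assms(3,4)] in auto)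
  show "fst (comb v w) = 2" by (simp add: comb_def)
qed

lemma comb_eval:
  assumes v: "fst v = 2" and w: "fst w = 2" and xy: "x \<in> A3" "y \<in> A3"
  shows "snd (comb v w) [x,y] = snd v [snd w [x,y], snd w [y,x]]"
proof -
  have sA: "set [x,y] \<subseteq> A3" using xy by auto
  have sw: "snd (comp_op A3 w 2 (\<lambda>j. proj A3 2 (1 - j))) [x,y] = snd w [y,x]"
  proof -
    have "snd (comp_op A3 w 2 (\<lambda>j. proj A3 2 (1 - j))) [x,y] = snd w (map (\<lambda>i. snd (proj A3 2 (1 - i)) [x,y]) [0..<fst w])"
      by (rule comp_eval) (use sA in auto)
    also have "map (\<lambda>i. snd (proj A3 2 (1 - i)) [x,y]) [0..<fst w] = [y,x]"
      unfolding w upt2 using proj_eval[OF _ sA] by simp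
    finally show ?thesis .
  qed
  have "snd (comb v w) [x,y] = snd v (map (\<lambda>i. snd (if i = 0 then w else comp_op A3 w 2 (\<lambda>j. proj A3 2 (1 - j))) [x,y]) [0..<fst v])"
    unfolding comb_def by (rule comp_eval) (use sA in auto)
  also have "map (\<lambda>i. snd (if i = 0 then w else comp_op A3 w 2 (\<lambda>j. proj A3 2 (1 - j))) [x,y]) [0..<fst v]
     = [snd w [x,y], snd w [y,x]]"
    unfolding v upt2 using sw by simp
  finally show ?thesis .
qed

lemma comb_comm:
  assumes v: "v \<in> C" "fst v = 2" and w: "w \<in> C" "fst w = 2" and pq: "p \<in> A3" "q \<in> A3"
    and U: "inv1 C {p,q}"
    and c: "snd v [p,q] = snd v [q,p] \<or> snd w [p,q] = snd w [q,p]"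
  shows "snd (comb v w) [p,q] = snd (comb v w) [q,p]"
proof -
  have e1: "snd (comb v w) [p,q] = snd v [snd w [p,q], snd w [q,p]]" by (rule comb_eval[OF v(2) w(2) pq])
  have e2: "snd (comb v w) [q,p] = snd v [snd w [q,p], snd w [p,q]]" by (rule comb_eval[OF v(2) w(2) pq(2,1)])
  have m1: "snd w [p,q] \<in> {p,q}" by (rule inv1D[OF U w(1)]) (use w in auto)
  have m2: "snd w [q,p] \<in> {p,q}" by (rule inv1D[OF U w(1)]) (use w in auto)
  show ?thesis unfolding e1 e2 using c m1 m2 by auto
qed

lemma witness:
  assumes pq: "p \<in> A3" "q \<in> A3" "p \<noteq> q" and U: "inv1 C {p,q}" and ns: "\<not> inv2 C {(p,q),(q,p)}"
  shows "\<exists>u\<in>C. fst u = 2 \<and> snd u [p,q] = snd u [q,p]"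
proof -
  have "{(p,q),(q,p)} \<subseteq> A3 \<times> A3" using pq by auto
  then obtain c where c: "c \<in> C" "\<not> pres2 c {(p,q),(q,p)}" using ns unfolding inv2_def by blast
  then obtain xs ys where l: "length xs = fst c" "length ys = fst c"
    and col: "\<forall>j<fst c. (xs!j, ys!j) \<in> {(p,q),(q,p)}" and out: "(snd c xs, snd c ys) \<notin> {(p,q),(q,p)}"
    unfolding pres2_def by blast
  have sx: "set xs \<subseteq> {p,q}"
  proof
    fix z assume "z \<in> set xs"
    then obtain j where "j < length xs" "z = xs ! j" by (metis in_set_conv_nth)
    then show "z \<in> {p,q}" using col l by auto
  qed
  have sy: "set ys \<subseteq> {p,q}"
  proof
    fix z assume "z \<in> set ys"
    then obtain j where "j < length ys" "z = ys ! j" by (metis in_set_conv_nth)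
    then show "z \<in> {p,q}" using col l by auto
  qed
  have cx: "snd c xs \<in> {p,q}" by (rule inv1D[OF U c(1) l(1) sx])
  have cy: "snd c ys \<in> {p,q}" by (rule inv1D[OF U c(1) l(2) sy])
  have eq: "snd c xs = snd c ys" using cx cy out by auto
  have n1: "1 \<le> fst c" using ops_arity[OF opsC[OF c(1)]] .
  define gs where "gs = (\<lambda>j. if xs ! j = p then proj A3 2 0 else proj A3 2 1)"
  define u where "u = comp_op A3 c 2 gs"
  have uC: "u \<in> C" unfolding u_def
    by (rule clone_comp[OF cl c(1)]) (auto simp: gs_def intro: clone_proj[OF cl])
  have sA: "set [p,q] \<subseteq> A3" "set [q,p] \<subseteq> A3" using pq by auto
  have u1: "snd u [p,q] = snd c xs"
  proof -
    have "snd u [p,q] = snd c (map (\<lambda>i. snd (gs i) [p,q]) [0..<fst c])" unfolding u_def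
      by (rule comp_eval) (use sA in auto)
    also have "map (\<lambda>i. snd (gs i) [p,q]) [0..<fst c] = xs"
    proof (rule nth_equalityI)
      show "length (map (\<lambda>i. snd (gs i) [p,q]) [0..<fst c]) = length xs" using l by simp
      fix j assume "j < length (map (\<lambda>i. snd (gs i) [p,q]) [0..<fst c])"
      then have j: "j < fst c" by simp
      then have "xs ! j = p \<or> xs ! j = q" using col by auto
      then show "map (\<lambda>i. snd (gs i) [p,q]) [0..<fst c] ! j = xs ! j"
        using j proj_eval[OF _ sA(1)] by (auto simp: gs_def)
    qed
    finally show ?thesis .
  qed
  have u2: "snd u [q,p] = snd c ys"
  proof -
    have "snd u [q,p] = snd c (map (\<lambda>i. snd (gs i) [q,p]) [0..<fst c])" unfolding u_def
      by (rule comp_eval) (use sA in auto)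
    also have "map (\<lambda>i. snd (gs i) [q,p]) [0..<fst c] = ys"
    proof (rule nth_equalityI)
      show "length (map (\<lambda>i. snd (gs i) [q,p]) [0..<fst c]) = length ys" using l by simp
      fix j assume "j < length (map (\<lambda>i. snd (gs i) [q,p]) [0..<fst c])"
      then have j: "j < fst c" by simp
      then have "(xs ! j, ys ! j) \<in> {(p,q),(q,p)}" using col by auto
      then show "map (\<lambda>i. snd (gs i) [q,p]) [0..<fst c] ! j = ys ! j"
        using j proj_eval[OF _ sA(2)] pq(3) by (auto simp: gs_def)
    qed
    finally show ?thesis .
  qed
  show ?thesis using uC u1 u2 eq by (intro bexI[of _ u]) (auto simp: u_def)
qed

lemma pair_witness:
  assumes caseB: "\<And>p q. p \<in> A3 \<Longrightarrow> q \<in> A3 \<Longrightarrow> p \<noteq> q \<Longrightarrow> \<not> inv2 C {(p,q),(q,p)}"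
    and pq: "p \<in> A3" "q \<in> A3" "p \<noteq> q"
  shows "\<exists>u\<in>C. fst u = 2 \<and> (inv1 C {p,q} \<longrightarrow> snd u [p,q] = snd u [q,p])"
proof (cases "inv1 C {p,q}")
  case True
  then show ?thesis using witness[OF pq True caseB[OF pq]] by blast
next
  case False
  have "proj A3 2 0 \<in> C" by (rule clone_proj[OF cl]) auto
  then show ?thesis using False by (intro bexI[of _ "proj A3 2 0"]) auto
qed

lemma w_exists:
  assumes caseB: "\<And>p q. p \<in> A3 \<Longrightarrow> q \<in> A3 \<Longrightarrow> p \<noteq> q \<Longrightarrow> \<not> inv2 C {(p,q),(q,p)}"
  shows "\<exists>w\<in>C. fst w = 2 \<and> (\<forall>p q. p \<in> A3 \<longrightarrow> q \<in> A3 \<longrightarrow> p \<noteq> q \<longrightarrow> inv1 C {p,q} \<longrightarrow> snd w [p,q] = snd w [q,p])"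
proof -
  obtain u01 where u01: "u01 \<in> C" "fst u01 = 2" "inv1 C {0,1} \<longrightarrow> snd u01 [0,1] = snd u01 [1,0]"
    using pair_witness[OF caseB, of 0 1] by (auto simp: A3_def)
  obtain u02 where u02: "u02 \<in> C" "fst u02 = 2" "inv1 C {0,2} \<longrightarrow> snd u02 [0,2] = snd u02 [2,0]"
    using pair_witness[OF caseB, of 0 2] by (auto simp: A3_def)
  obtain u12 where u12: "u12 \<in> C" "fst u12 = 2" "inv1 C {1,2} \<longrightarrow> snd u12 [1,2] = snd u12 [2,1]"
    using pair_witness[OF caseB, of 1 2] by (auto simp: A3_def)
  define v where "v = comb u01 u02"
  define w where "w = comb v u12"
  have v: "v \<in> C" "fst v = 2" unfolding v_def using comb_C[OF u01(1,2) u02(1,2)] by auto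
  have w: "w \<in> C" "fst w = 2" unfolding w_def using comb_C[OF v u12(1,2)] by auto
  have A: "(0::nat) \<in> A3" "(1::nat) \<in> A3" "(2::nat) \<in> A3" by (auto simp: A3_def)
  have v01: "inv1 C {0,1} \<longrightarrow> snd v [0,1] = snd v [1,0]"
    unfolding v_def using comb_comm[OF u01(1,2) u02(1,2) A(1,2)] u01(3) by blast
  have v02: "inv1 C {0,2} \<longrightarrow> snd v [0,2] = snd v [2,0]"
    unfolding v_def using comb_comm[OF u01(1,2) u02(1,2) A(1,3)] u02(3) by blast
  have w01: "inv1 C {0,1} \<longrightarrow> snd w [0,1] = snd w [1,0]"
    unfolding w_def using comb_comm[OF v u12(1,2) A(1,2)] v01 by blast
  have w02: "inv1 C {0,2} \<longrightarrow> snd w [0,2] = snd w [2,0]"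
    unfolding w_def using comb_comm[OF v u12(1,2) A(1,3)] v02 by blast
  have w12: "inv1 C {1,2} \<longrightarrow> snd w [1,2] = snd w [2,1]"
    unfolding w_def using comb_comm[OF v u12(1,2) A(2,3)] u12(3) by blast
  have "\<forall>p q. p \<in> A3 \<longrightarrow> q \<in> A3 \<longrightarrow> p \<noteq> q \<longrightarrow> inv1 C {p,q} \<longrightarrow> snd w [p,q] = snd w [q,p]"
  proof (intro allI impI)
    fix p q assume "p \<in> A3" "q \<in> A3" "p \<noteq> q" "inv1 C {p,q}"
    then show "snd w [p,q] = snd w [q,p]" using w01 w02 w12 unfolding A3_iff
      by (elim disjE) (simp_all add: insert_commute)
  qed
  then show ?thesis using w by blast
qed

end


theorem lemma6p2:
  fixes C :: "nat operation set"
  assumes "clone A3 C"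
    and "idempotent_clone A3 C"
    and "malcev_clone A3 C"
    and "has_majority A3 C"
    and "\<not> clone_preserves C (mu 0)"
    and "\<not> clone_preserves C (mu 1)"
    and "\<not> clone_preserves C (mu 2)"
    and "\<not> clone_preserves C phi"
  shows "minion_equiv A3 A2 C C2 \<or> minion_equiv A3 A2 C I2"
proof -
  obtain d where d: "d \<in> C" "fst d = 3" "\<forall>x\<in>A3. \<forall>y\<in>A3. snd d [y,x,x] = y \<and> snd d [x,x,y] = y"
    using assms(3) unfolding malcev_clone_def by blast
  obtain m where m: "m \<in> C" "fst m = 3"
    "\<forall>x\<in>A3. \<forall>y\<in>A3. snd m [x,y,y] = y \<and> snd m [y,x,y] = y \<and> snd m [y,y,x] = y"
    using assms(4) unfolding has_majority_def by blast
  interpret ctx C d m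
    by (unfold_locales) (use assms d m in auto)
  show ?thesis
  proof (cases "\<exists>p q. p \<in> A3 \<and> q \<in> A3 \<and> p \<noteq> q \<and> inv2 C {(p,q),(q,p)}")
    case True
    then obtain p q where pq: "p \<in> A3" "q \<in> A3" "p \<noteq> q" "inv2 C {(p,q),(q,p)}" by blast
    have h1: "minion_hom A3 A2 C C2 (rho (embp p q) (decp p))"
      by (rule hom_C_C2[OF pq(3,1,2,4)])
    have uniq: "a' = dflt" if "a' \<in> A3" "inv2 C (tr a')" for a'
      using dflt_fix[OF that] by simp
    have h2: "minion_hom A2 A3 C2 C (xi 2 (hc2 dflt) (e2 dflt))"
      by (rule hom_C2_C[OF dflt_A3 uniq])
    have "minion_equiv A3 A2 C C2" unfolding minion_equiv_def using h1 h2 by blast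
    then show ?thesis by simp
  next
    case False
    then have caseB: "\<And>p q. p \<in> A3 \<Longrightarrow> q \<in> A3 \<Longrightarrow> p \<noteq> q \<Longrightarrow> \<not> inv2 C {(p,q),(q,p)}" by blast
    obtain w where w: "w \<in> C" "fst w = 2"
      and comm: "\<forall>p q. p \<in> A3 \<longrightarrow> q \<in> A3 \<longrightarrow> p \<noteq> q \<longrightarrow> inv1 C {p,q} \<longrightarrow> snd w [p,q] = snd w [q,p]"
      using w_exists[OF caseB] by blast
    have comm': "\<And>p q. p \<in> A3 \<Longrightarrow> q \<in> A3 \<Longrightarrow> p \<noteq> q \<Longrightarrow> inv1 C {p,q} \<Longrightarrow> snd w [p,q] = snd w [q,p]"
      using comm by blast
    have h1: "minion_hom A3 A2 C I2 (rho (\<lambda>v. v) dec1)" by (rule hom_C_I2)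
    have h2: "minion_hom A2 A3 I2 C (xi 6 hc6 (e6 (oB w 0 1) (oB w 0 2) (oB w 1 2) dflt))"
      by (rule hom_I2_C[OF w comm'])
    have "minion_equiv A3 A2 C I2" unfolding minion_equiv_def using h1 h2 by blast
    then show ?thesis by simp
  qed
qed


end
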